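(* Let $\hat K$ be the reference triangle with vertices $(0,0),(1,0),(0,1)$ and let $k\ge 0$. For each edge $f$ of $\hat K$ and each $0\le i\le k$, let $\mathscr{L}^{f,i}$ be the function on $\partial\hat K$ which vanishes off $f$ and equals on $f$ the Legendre polynomial of degree $i$ (in the arclength variable of $f$), normalised so that $\int_{\partial\hat K}(\mathscr{L}^{f,i})^2=1$. Let $$\Phi_k=\{\mathbf{u}\in \mathbb{P}_k(\hat K)^2:\ \nabla\cdot\mathbf{u}=0,\ \mathbf{u}\cdot\mathbf{n}_{out}=0 \text{ on }\partial\hat K\}.$$ Then every $\mathbf{u}\in\mathbb{P}_k(\hat K)^2$ with $\nabla\cdot\mathbf{u}=0$ can be uniquely decomposed as $$\mathbf{u}=\bar{\mathbf{v}}^0_{\mathbf{u}}+\bar{\mathbf{v}}^1_{\mathbf{u}}+\sum_{f}\sum_{i=1}^{k}\bar{\mathbf{v}}^{f,i}_{\mathbf{u}},$$ where the sum over $f$ runs over the three edges of $\hat K$, and (i) $\bar{\mathbf{v}}^0_{\mathbf{u}}\in\Phi_k$; (ii) $\bar{\mathbf{v}}^1_{\mathbf{u}}$ is a constant vector; (iii) each $\bar{\mathbf{v}}^{f,i}_{\mathbf{u}}\in\mathbb{P}_k(\hat K)^2$ is $L^2(\hat K)^2$-orthogonal to $\Phi_k$, satisfies $\nabla\cdot\bar{\mathbf{v}}^{f,i}_{\mathbf{u}}=0$, and its normal trace $\bar{\mathbf{v}}^{f,i}_{\mathbf{u}}\cdot\mathbf{n}_{out}|_{\partial\hat K}$ is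 $L^2(\partial\hat K)$-orthogonal to every $\mathscr{L}^{g,j}$ with $g$ an edge, $0\le j\le k$, and $(g,j)\neq(f,i)$.
   Context: $\mathbb{P}_k(\hat K)^2$ denotes vector fields on $\hat K$ whose two components are polynomials of total degree at most $k$; $\mathbf{n}_{out}$ is the outward unit normal on $\partial\hat K$. *)

theory Defs
  imports "HOL-Analysis.Analysis"
begin

definition Khat :: "(real \<times> real) set" where
  "Khat = {(x, y). 0 \<le> x \<and> 0 \<le> y \<and> x + y \<le> 1}"

definition is_poly2 :: "nat \<Rightarrow> (real \<times> real \<Rightarrow> real) \<Rightarrow> bool" where
  "is_poly2 k p \<longleftrightarrow> (\<exists>c :: nat \<Rightarrow> nat \<Rightarrow> real. \<forall>x y.
      p (x, y) = (\<Sum>a\<le>k. \<Sum>b\<le>k - a. c a b * x ^ a * y ^ b))"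

definition vpoly :: "nat \<Rightarrow> (real \<times> real \<Rightarrow> real \<times> real) \<Rightarrow> bool" where
  "vpoly k u \<longleftrightarrow> is_poly2 k (\<lambda>p. fst (u p)) \<and> is_poly2 k (\<lambda>p. snd (u p))"

definition divergence :: "(real \<times> real \<Rightarrow> real \<times> real) \<Rightarrow> real \<times> real \<Rightarrow> real" where
  "divergence u p = deriv (\<lambda>s. fst (u (s, snd p))) (fst p)
                  + deriv (\<lambda>s. snd (u (fst p, s))) (snd p)"

definition divfree :: "(real \<times> real \<Rightarrow> real \<times> real) \<Rightarrow> bool" where
  "divfree u \<longleftrightarrow> (\<forall>p. divergence u p = 0)"

datatype edge = Bottom | Hyp | Left

definition edges :: "edge set" where "edges = {Bottom, Hyp, Left}"

fun gam :: "edge \<Rightarrow> real \<Rightarrow> real \<times> real" where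
  "gam Bottom t = (t, 0)"
| "gam Hyp t = (1 - t, t)"
| "gam Left t = (0, 1 - t)"

fun elen :: "edge \<Rightarrow> real" where
  "elen Bottom = 1"
| "elen Hyp = sqrt 2"
| "elen Left = 1"

fun nout :: "edge \<Rightarrow> real \<times> real" where
  "nout Bottom = (0, -1)"
| "nout Hyp = (1 / sqrt 2, 1 / sqrt 2)"
| "nout Left = (-1, 0)"

text \<open>Functions on the boundary are represented edgewise: phi f t is the value at gam f t.\<close>
definition ntrace :: "(real \<times> real \<Rightarrow> real \<times> real) \<Rightarrow> edge \<Rightarrow> real \<Rightarrow> real" where
  "ntrace u f t = u (gam f t) \<bullet> nout f"

text \<open>L^2(boundary) inner product (arclength measure: ds = elen f * dt).\<close>
definition L2B :: "(edge \<Rightarrow> real \<Rightarrow> real) \<Rightarrow> (edge \<Rightarrow> real \<Rightarrow> real) \<Rightarrow> real" where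
  "L2B phi psi = (\<Sum>f\<in>edges. elen f * integral {0..1} (\<lambda>t. phi f t * psi f t))"

definition L2K :: "(real \<times> real \<Rightarrow> real \<times> real) \<Rightarrow> (real \<times> real \<Rightarrow> real \<times> real) \<Rightarrow> real" where
  "L2K u v = integral Khat (\<lambda>p. u p \<bullet> v p)"

text \<open>Legendre polynomials on [-1,1] (Bonnet recurrence).\<close>
fun legendre :: "nat \<Rightarrow> real \<Rightarrow> real" where
  "legendre 0 x = 1"
| "legendre (Suc 0) x = x"
| "legendre (Suc (Suc n)) x =
     ((2 * real n + 3) * x * legendre (Suc n) x - (real n + 1) * legendre n x) / (real n + 2)"

text \<open>Unnormalised: on edge f, Legendre polynomial of degree i in the arclength
  variable s = elen f * t in [0, elen f]; zero on other edges.  Then normalised.\<close>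
definition Lraw :: "edge \<Rightarrow> nat \<Rightarrow> edge \<Rightarrow> real \<Rightarrow> real" where
  "Lraw f i g t = (if g = f then legendre i (2 * t - 1) else 0)"

definition Leg :: "edge \<Rightarrow> nat \<Rightarrow> edge \<Rightarrow> real \<Rightarrow> real" where
  "Leg f i g t = Lraw f i g t / sqrt (L2B (Lraw f i) (Lraw f i))"

definition Phi :: "nat \<Rightarrow> (real \<times> real \<Rightarrow> real \<times> real) set" where
  "Phi k = {u. vpoly k u \<and> divfree u \<and> (\<forall>f\<in>edges. \<forall>t\<in>{0..1}. ntrace u f t = 0)}"

definition is_decomp ::
  "nat \<Rightarrow> (real \<times> real \<Rightarrow> real \<times> real) \<Rightarrow> (real \<times> real \<Rightarrow> real \<times> real)
     \<Rightarrow> (real \<times> real \<Rightarrow> real \<times> real) \<Rightarrow> (edge \<Rightarrow> nat \<Rightarrow> real \<times> real \<Rightarrow> real \<times> real) \<Rightarrow> bool" where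
  "is_decomp k u v0 v1 vf \<longleftrightarrow>
     (\<forall>p. u p = v0 p + v1 p + (\<Sum>f\<in>edges. \<Sum>i=1..k. vf f i p))
   \<and> v0 \<in> Phi k
   \<and> (\<exists>c. \<forall>p. v1 p = c)
   \<and> (\<forall>f\<in>edges. \<forall>i\<in>{1..k}.
        vpoly k (vf f i) \<and> divfree (vf f i)
      \<and> (\<forall>w\<in>Phi k. L2K (vf f i) w = 0)
      \<and> (\<forall>g\<in>edges. \<forall>j\<le>k. (g, j) \<noteq> (f, i) \<longrightarrow> L2B (ntrace (vf f i)) (Leg g j) = 0))"

end

theory Submission
  imports Defs "HOL-Computational_Algebra.Polynomial"
begin

fun LS :: "nat \<Rightarrow> real poly" where
  "LS 0 = 1"
| "LS (Suc 0) = [:-1,2:]"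
| "LS (Suc (Suc n)) = smult (1/(real n+2)) (smult (2*real n+3) ([:-1,2:] * LS (Suc n)) - smult (real n+1) (LS n))"

lemma poly_LS: "poly (LS n) t = legendre n (2*t-1)"
  by (induction n rule: LS.induct) (auto simp: field_simps)

lemma legendre_1: "legendre n 1 = 1"
  by (induction n rule: LS.induct) (auto simp: field_simps)

lemma LS_deg: "degree (LS n) \<le> n \<and> coeff (LS n) n > 0"
proof (induction n rule: LS.induct)
  case 1 then show ?case by simp
next
  case 2 then show ?case by simp
next
  case (3 n)
  have d1: "degree ([:-1,2:] * LS (Suc n)) \<le> Suc (Suc n)"
    using degree_mult_le[of "[:-1,2:]" "LS (Suc n)"] 3 by simp
  have d: "degree (LS (Suc (Suc n))) \<le> Suc (Suc n)"
    using d1 3 by (simp add: degree_diff_le le_SucI)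
  have c0: "coeff (LS n) (Suc (Suc n)) = 0" "coeff (LS (Suc n)) (Suc (Suc n)) = 0"
    using 3 by (auto intro!: coeff_eq_0)
  have "coeff ([:-1,2:] * LS (Suc n)) (Suc (Suc n)) = 2 * coeff (LS (Suc n)) (Suc n)"
    using c0 by (simp add: mult_pCons_left coeff_pCons)
  then have "coeff (LS (Suc (Suc n))) (Suc (Suc n)) = (2*real n+3) * (2 * coeff (LS (Suc n)) (Suc n)) / (real n + 2)"
    using c0 by simp
  moreover have "\<dots> > 0" using 3 by simp
  ultimately show ?case using d by simp
qed

lemma LS_degree: "degree (LS n) = n"
  using LS_deg[of n] by (metis le_antisym le_degree less_irrefl)

lemma LS_rec_pt: "poly (LS (Suc (Suc n))) t = ((2*real n+3) * (2*t-1) * poly (LS (Suc n)) t - (real n+1) * poly (LS n) t) / (real n+2)"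
  by (simp add: field_simps)

lemma LS_drec_pt: "poly (pderiv (LS (Suc (Suc n)))) t = ((2*real n+3) * (2 * poly (LS (Suc n)) t + (2*t-1) * poly (pderiv (LS (Suc n))) t) - (real n+1) * poly (pderiv (LS n)) t) / (real n+2)"
  by (simp add: pderiv_smult pderiv_diff pderiv_mult pderiv_pCons field_simps)

lemma LS_ids: "(2*t-1) * poly (pderiv (LS (Suc n))) t - poly (pderiv (LS n)) t = 2*(real n+1) * poly (LS (Suc n)) t
   \<and> 2*(t-t^2) * poly (pderiv (LS (Suc n))) t = (real n+1) * (poly (LS n) t - (2*t-1) * poly (LS (Suc n)) t)"
proof (induction n)
  case 0
  then show ?case by (simp add: pderiv_pCons algebra_simps power2_eq_square)
next
  case (Suc n)
  define a where "a = poly (LS n) t"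
  define b where "b = poly (LS (Suc n)) t"
  define c where "c = poly (LS (Suc (Suc n))) t"
  define a' where "a' = poly (pderiv (LS n)) t"
  define b' where "b' = poly (pderiv (LS (Suc n))) t"
  define c' where "c' = poly (pderiv (LS (Suc (Suc n)))) t"
  define x where "x = 2*t-1"
  define m where "m = real n + 1"
  have A: "x*b' - a' = 2*m*b" and B: "2*(t-t^2)*b' = m*(a - x*b)"
    using Suc by (simp_all add: a_def b_def a'_def b'_def x_def m_def)
  have rec: "(m+1)*c = (2*m+1)*x*b - m*a"
    unfolding c_def a_def b_def x_def m_def by (simp add: LS_rec_pt field_simps)
  have drec: "(m+1)*c' = (2*m+1)*(2*b + x*b') - m*a'"
    unfolding c'_def a'_def b'_def b_def x_def m_def by (simp only: LS_drec_pt) (simp add: field_simps)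
  have m1: "m+1 \<noteq> 0" unfolding m_def by simp
  have "(m+1)*c' = (m+1)*(2*(m+1)*b + x*b')"
    using drec A by algebra
  then have cd: "c' = 2*(m+1)*b + x*b'" using m1 by simp
  have x2: "x^2 - 1 = -4*(t-t^2)" unfolding x_def by algebra
  have G1: "x*c' - b' = 2*(m+1)*c"
  proof -
    have "(m+1)*(x*c' - b') = (m+1)*(2*(m+1)*c)"
      using cd B rec x2 by algebra
    then show ?thesis using m1 by simp
  qed
  have G2: "2*(t-t^2)*c' = (m+1)*(b - x*c)"
    using cd B rec x2 by algebra
  show ?case using G1 G2
    by (simp add: a_def b_def c_def a'_def b'_def c'_def x_def m_def algebra_simps)
qed

lemma LS_ode_pt: "poly (pderiv ([:0,1,-1:] * pderiv (LS m))) t = - (real m * (real m + 1)) * poly (LS m) t"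
proof (cases m)
  case 0 then show ?thesis by simp
next
  case (Suc n)
  have eqn: "[:0,1,-1:] * pderiv (LS (Suc n)) = smult ((real n + 1)/2) (LS n - [:-1,2:] * LS (Suc n))"
  proof -
    have "poly ([:0,1,-1:] * pderiv (LS (Suc n))) t = poly (smult ((real n + 1)/2) (LS n - [:-1,2:] * LS (Suc n))) t" for t
      using conjunct2[OF LS_ids[of t n]] by (simp add: field_simps power2_eq_square)
    then show ?thesis by (intro poly_eq_poly_eq_iff[THEN iffD1] ext) simp
  qed
  have e: "poly (pderiv ([:0,1,-1:] * pderiv (LS (Suc n)))) t = (real n+1)/2 * (poly (pderiv (LS n)) t - 2*poly (LS (Suc n)) t - (2*t-1)*poly (pderiv (LS (Suc n))) t)"
    unfolding eqn by (simp add: pderiv_smult pderiv_diff pderiv_add pderiv_mult pderiv_pCons pderiv_minus algebra_simps)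
  have A: "poly (pderiv (LS n)) t = (2*t-1)*poly (pderiv (LS (Suc n))) t - 2*(real n+1)*poly (LS (Suc n)) t"
    using LS_ids[of t n] by linarith
  show ?thesis unfolding Suc e A by (simp add: field_simps)
qed

lemma ftc_poly: fixes F :: "real poly" shows "integral {0..1} (\<lambda>t. poly (pderiv F) t) = poly F 1 - poly F 0"
proof -
  have "((\<lambda>t. poly (pderiv F) t) has_integral (poly F 1 - poly F 0)) {0..1}"
    by (rule fundamental_theorem_of_calculus[of 0 1 "poly F" "poly (pderiv F)"])
       (auto intro!: has_real_derivative_iff_has_vector_derivative[THEN iffD1] DERIV_subset[OF poly_DERIV])
  then show ?thesis by (rule integral_unique)
qed

lemma cont_poly_int: "(\<lambda>t. poly p t) integrable_on {0..(1::real)}"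
  by (intro integrable_continuous_real continuous_intros)

lemma LS_orth:
  assumes "m \<noteq> n"
  shows "integral {0..1} (\<lambda>t. poly (LS m) t * poly (LS n) t) = 0"
proof -
  define W where "W = [:0,1,-1::real:]"
  define F where "F = W * pderiv (LS m) * LS n - W * pderiv (LS n) * LS m"
  have pF: "poly (pderiv F) t = (real n * (real n + 1) - real m * (real m + 1)) * (poly (LS m) t * poly (LS n) t)" for t
  proof -
    have eq: "pderiv F = pderiv (W * pderiv (LS m)) * LS n + (W * pderiv (LS m)) * pderiv (LS n)
        - (pderiv (W * pderiv (LS n)) * LS m + (W * pderiv (LS n)) * pderiv (LS m))"
      unfolding F_def by (simp add: pderiv_diff pderiv_mult algebra_simps)
    show ?thesis by (simp only: eq poly_diff poly_add poly_mult LS_ode_pt[folded W_def]) (simp add: algebra_simps)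
  qed
  have "integral {0..1} (\<lambda>t. poly (pderiv F) t) = 0"
    unfolding ftc_poly by (simp add: F_def W_def)
  then have "(real n * (real n + 1) - real m * (real m + 1)) * integral {0..1} (\<lambda>t. poly (LS m) t * poly (LS n) t) = 0"
    unfolding pF by simp
  moreover have "real n * (real n + 1) - real m * (real m + 1) \<noteq> 0"
  proof
    assume "real n * (real n + 1) - real m * (real m + 1) = 0"
    then have "n * (n+1) = m * (m+1)" by (metis (mono_tags, lifting) eq_iff_diff_eq_0 of_nat_1 of_nat_add of_nat_eq_iff of_nat_mult)
    moreover have "m < n \<Longrightarrow> m * (m+1) < n * (n+1)" by (rule mult_strict_mono) auto
    moreover have "n < m \<Longrightarrow> n * (n+1) < m * (m+1)" by (rule mult_strict_mono) auto
    ultimately show False using assms by (metis less_irrefl nat_neq_iff)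
  qed
  ultimately show ?thesis by simp
qed

lemma int0_imp_zero:
  fixes f :: "real \<Rightarrow> real"
  assumes "continuous_on {0..1} f" "\<And>t. t \<in> {0..1} \<Longrightarrow> 0 \<le> f t" "integral {0..1::real} f = 0" "t \<in> {0..1}"
  shows "f t = 0"
proof -
  have "(f has_integral 0) {0..1}"
    using assms(3) integrable_continuous_real[OF assms(1)] by (metis has_integral_integral)
  then show ?thesis
    using has_integral_0_cbox_imp_0[of 0 1 f t] assms by auto
qed

lemma LS_norm_pos: "integral {0..1} (\<lambda>t. poly (LS n) t * poly (LS n) t) > 0"
proof -
  have nn: "0 \<le> integral {0..1} (\<lambda>t. poly (LS n) t * poly (LS n) t)"
    by (intro integral_nonneg integrable_continuous_real continuous_intros) auto
  have "integral {0..1} (\<lambda>t. poly (LS n) t * poly (LS n) t) \<noteq> 0"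
  proof
    assume "integral {0..1} (\<lambda>t. poly (LS n) t * poly (LS n) t) = 0"
    then have "poly (LS n) 1 * poly (LS n) 1 = 0"
      by (intro int0_imp_zero[where f="\<lambda>t. poly (LS n) t * poly (LS n) t"]) (auto intro!: continuous_intros)
    then show False by (simp add: poly_LS legendre_1)
  qed
  then show ?thesis using nn by simp
qed

lemma degree_le_Suc_coeff:
  assumes "degree p \<le> Suc k" "coeff p (Suc k) = 0"
  shows "degree p \<le> k"
proof (rule ccontr)
  assume "\<not> degree p \<le> k"
  then have "degree p = Suc k" using assms(1) by simp
  then have "p = 0" using assms(2) by (metis leading_coeff_0_iff)
  then show False using \<open>degree p = Suc k\<close> by simp
qed

lemma LS_span: "degree p \<le> k \<Longrightarrow> \<exists>c. p = (\<Sum>j\<le>k. smult (c j) (LS j))"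
proof (induction k arbitrary: p)
  case 0
  then have "p = [:coeff p 0:]" by (metis degree0_coeffs le_zero_eq coeff_pCons_0)
  then have "p = smult (coeff p 0) (LS 0)" by simp
  then show ?case by auto
next
  case (Suc k)
  define r where "r = coeff p (Suc k) / coeff (LS (Suc k)) (Suc k)"
  define q where "q = p - smult r (LS (Suc k))"
  have cne: "coeff (LS (Suc k)) (Suc k) \<noteq> 0" using LS_deg[of "Suc k"] by simp
  have "degree q \<le> Suc k"
    unfolding q_def using Suc.prems LS_degree[of "Suc k"]
    by (metis degree_diff_le degree_smult_le order.trans)
  moreover have "coeff q (Suc k) = 0" unfolding q_def r_def using cne by simp
  ultimately have "degree q \<le> k" by (rule degree_le_Suc_coeff)
  then obtain c where c: "q = (\<Sum>j\<le>k. smult (c j) (LS j))" using Suc.IH by blast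
  define c' where "c' = c(Suc k := r)"
  have "p = q + smult r (LS (Suc k))" unfolding q_def by simp
  also have "\<dots> = (\<Sum>j\<le>Suc k. smult (c' j) (LS j))"
    unfolding c c'_def by (simp add: atMost_Suc)
  finally show ?case by blast
qed

lemma ortho_zero:
  assumes "degree p \<le> k" "\<And>j. j \<le> k \<Longrightarrow> integral {0..1} (\<lambda>t. poly p t * poly (LS j) t) = 0"
    "t \<in> {0..1}"
  shows "poly p t = 0"
proof -
  obtain c where c: "p = (\<Sum>j\<le>k. smult (c j) (LS j))" using LS_span[OF assms(1)] by blast
  have "integral {0..1} (\<lambda>t. poly p t * poly p t) = integral {0..1} (\<lambda>t. \<Sum>j\<le>k. c j * (poly p t * poly (LS j) t))"
    by (rule integral_cong) (subst (2) c, simp add: poly_sum sum_distrib_left algebra_simps)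
  also have "\<dots> = (\<Sum>j\<le>k. integral {0..1} (\<lambda>t. c j * (poly p t * poly (LS j) t)))"
    by (rule integral_sum) (auto intro!: integrable_continuous_real continuous_intros)
  also have "\<dots> = 0" using assms(2) by simp
  finally have "integral {0..1} (\<lambda>t. poly p t * poly p t) = 0" .
  then have "poly p t * poly p t = 0"
    using assms(3) by (intro int0_imp_zero[where f="\<lambda>t. poly p t * poly p t"]) (auto intro!: continuous_intros)
  then show ?thesis by simp
qed

lemma poly_sum_le: fixes p :: "real poly" assumes "degree p \<le> k" shows "poly p x = (\<Sum>a\<le>k. coeff p a * x^a)"
  unfolding poly_altdef
  by (rule sum.mono_neutral_left) (use assms in \<open>auto simp: coeff_eq_0\<close>)

lemma sum01:
  fixes f :: "nat \<Rightarrow> 'a::comm_monoid_add"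
  assumes "\<And>b. 2 \<le> b \<Longrightarrow> f b = (0::'a::comm_monoid_add)"
  shows "(\<Sum>b\<le>m. f b) = f 0 + (if 1 \<le> m then f 1 else 0)"
proof (cases "m = 0")
  case True then show ?thesis by (simp add: atMost_0)
next
  case False
  have "(\<Sum>b\<le>m. f b) = (\<Sum>b\<in>{0,1}. f b)"
    using False assms by (intro sum.mono_neutral_right) auto
  then show ?thesis using False by simp
qed

lemma is_poly2_sq:
  assumes "is_poly2 k p"
  shows "\<exists>C. \<forall>x y. p (x,y) = (\<Sum>a\<le>k. \<Sum>b\<le>k. C a b * x^a * y^b)"
proof -
  obtain c where c: "\<And>x y. p (x, y) = (\<Sum>a\<le>k. \<Sum>b\<le>k - a. c a b * x ^ a * y ^ b)"
    using assms unfolding is_poly2_def by blast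
  define C where "C a b = (if b \<le> k - a then c a b else 0)" for a b
  have "p (x,y) = (\<Sum>a\<le>k. \<Sum>b\<le>k. C a b * x^a * y^b)" for x y
    unfolding c C_def
    by (rule sum.cong[OF refl], rule sum.mono_neutral_cong_left) auto
  then show ?thesis by blast
qed

lemma is_poly2_add: "is_poly2 k p \<Longrightarrow> is_poly2 k q \<Longrightarrow> is_poly2 k (\<lambda>z. p z + q z)"
  unfolding is_poly2_def
  apply (elim exE)
  subgoal for c d by (rule exI[of _ "\<lambda>a b. c a b + d a b"]) (simp add: sum.distrib algebra_simps)
  done

lemma is_poly2_scale: "is_poly2 k p \<Longrightarrow> is_poly2 k (\<lambda>z. r * p z)"
  unfolding is_poly2_def
  apply (elim exE)
  subgoal for c by (rule exI[of _ "\<lambda>a b. r * c a b"]) (simp add: sum_distrib_left algebra_simps)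
  done

lemma is_poly2_const: "is_poly2 k (\<lambda>z. r)"
  unfolding is_poly2_def
proof (intro exI allI)
  fix x y :: real
  define c where "c a b = (if a = 0 \<and> b = 0 then r else 0)" for a b :: nat
  have "(\<Sum>b\<le>k - a. c a b * x ^ a * y ^ b) = (if a = 0 then r else 0)" for a
  proof (cases "a = 0")
    case True
    have "(\<Sum>b\<le>k - a. c a b * x ^ a * y ^ b) = (\<Sum>b\<le>k - a. if b = 0 then r else 0)"
      by (rule sum.cong) (auto simp: c_def True)
    then show ?thesis using True by simp
  next
    case False then show ?thesis by (simp add: c_def)
  qed
  then show "r = (\<Sum>a\<le>k. \<Sum>b\<le>k - a. c a b * x ^ a * y ^ b)" by simp
qed

lemma is_poly2_cont:
  assumes "is_poly2 k p" shows "continuous_on UNIV p"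
proof -
  obtain C where C: "\<And>x y. p (x,y) = (\<Sum>a\<le>k. \<Sum>b\<le>k. C a b * x^a * y^b)"
    using is_poly2_sq[OF assms] by blast
  have "p = (\<lambda>z. \<Sum>a\<le>k. \<Sum>b\<le>k. C a b * fst z^a * snd z^b)"
    using C by (auto simp: fun_eq_iff)
  moreover have "continuous_on UNIV (\<lambda>z::real\<times>real. \<Sum>a\<le>k. \<Sum>b\<le>k. C a b * fst z^a * snd z^b)"
    by (intro continuous_intros)
  ultimately show ?thesis by simp
qed

lemma is_poly2_comp_lin:
  assumes "is_poly2 k p" "degree A \<le> 1" "degree B \<le> 1"
  shows "\<exists>P. degree P \<le> k \<and> (\<forall>t. p (poly A t, poly B t) = poly P t)"
proof -
  obtain c where c: "\<And>x y. p (x, y) = (\<Sum>a\<le>k. \<Sum>b\<le>k - a. c a b * x ^ a * y ^ b)"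
    using assms unfolding is_poly2_def by blast
  define P where "P = (\<Sum>a\<le>k. \<Sum>b\<le>k - a. smult (c a b) (A^a * B^b))"
  have dg: "degree (smult (c a b) (A^a * B^b)) \<le> k" if ab: "a \<in> {..k}" "b \<in> {..k-a}" for a b
  proof -
    have "degree (smult (c a b) (A^a * B^b)) \<le> degree (A^a) + degree (B^b)"
      by (metis degree_mult_le degree_smult_le order.trans)
    also have "\<dots> \<le> degree A * a + degree B * b"
      by (intro add_mono degree_power_le)
    also have "\<dots> \<le> a + b" using assms(2,3)
      by (intro add_mono) (auto intro: order.trans[OF mult_right_mono[of _ 1]])
    also have "\<dots> \<le> k" using ab by auto
    finally show "degree (smult (c a b) (A^a * B^b)) \<le> k" .
  qed
  have "degree P \<le> k"
    unfolding P_def by (rule degree_sum_le, simp, rule degree_sum_le, simp, rule dg)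
  moreover have "p (poly A t, poly B t) = poly P t" for t
    unfolding c P_def by (simp add: poly_sum mult.assoc)
  ultimately show ?thesis by blast
qed

lemma uni_zero:
  fixes C :: "nat \<Rightarrow> real"
  assumes "infinite A" "\<And>x. x \<in> A \<Longrightarrow> (\<Sum>a\<le>K. C a * x^a) = 0"
  shows "(\<Sum>a\<le>K. C a * x^a) = 0"
proof -
  define P where "P = (\<Sum>a\<le>K. monom (C a) a)"
  have pP: "poly P z = (\<Sum>a\<le>K. C a * z^a)" for z
    unfolding P_def by (simp add: poly_sum poly_monom)
  have "P = 0"
  proof (rule ccontr)
    assume "P \<noteq> 0"
    then have "finite {z. poly P z = 0}" by (rule poly_roots_finite)
    moreover have "A \<subseteq> {z. poly P z = 0}" using assms(2) pP by auto
    ultimately show False using assms(1) finite_subset by blast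
  qed
  then show ?thesis using pP[of x] by simp
qed

lemma is_poly2_identity:
  assumes "is_poly2 k p" "\<And>x y. x \<in> {0..1/2} \<Longrightarrow> y \<in> {0..1/2} \<Longrightarrow> p (x,y) = 0"
  shows "p z = 0"
proof -
  obtain C where C: "\<And>x y. p (x,y) = (\<Sum>a\<le>k. \<Sum>b\<le>k. C a b * x^a * y^b)"
    using is_poly2_sq[OF assms(1)] by blast
  have inf: "infinite {0..1/2::real}" by (rule infinite_Icc) simp
  have s1: "p (x,y) = (\<Sum>a\<le>k. (\<Sum>b\<le>k. C a b * y^b) * x^a)" for x y
    unfolding C by (simp add: sum_distrib_left sum_distrib_right mult_ac)
  have s2: "p (x,y) = (\<Sum>b\<le>k. (\<Sum>a\<le>k. C a b * x^a) * y^b)" for x y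
    unfolding C by (subst sum.swap) (simp add: sum_distrib_left sum_distrib_right mult_ac)
  have h1: "p (x,y) = 0" if "y \<in> {0..1/2}" for x y
    unfolding s1 by (rule uni_zero[OF inf]) (use assms(2)[OF _ that] s1 in auto)
  have "p (x,y) = 0" for x y
    unfolding s2 by (rule uni_zero[OF inf]) (use h1 s2 in auto)
  then show ?thesis by (cases z) simp
qed

lemma is_poly2_formX:
  assumes "degree g \<le> k" "degree h < k"
  shows "is_poly2 k (\<lambda>(x,y). poly g x + y * poly h x)"
  unfolding is_poly2_def
proof (intro exI allI)
  fix x y :: real
  define c where "c a b = (if b = 0 then coeff g a else if b = 1 then coeff h a else 0)" for a b :: nat
  have "(\<Sum>a\<le>k. \<Sum>b\<le>k - a. c a b * x ^ a * y ^ b) = (\<Sum>a\<le>k. coeff g a * x^a + coeff h a * x^a * y)"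
  proof (intro sum.cong refl)
    fix a assume a: "a \<in> {..k}"
    have "(\<Sum>b\<le>k - a. c a b * x ^ a * y ^ b) = c a 0 * x^a + (if 1 \<le> k - a then c a 1 * x^a * y else 0)"
      by (subst sum01) (auto simp: c_def)
    also have "\<dots> = coeff g a * x^a + coeff h a * x^a * y"
      using a assms(2) by (auto simp: c_def coeff_eq_0)
    finally show "(\<Sum>b\<le>k - a. c a b * x ^ a * y ^ b) = coeff g a * x^a + coeff h a * x^a * y" .
  qed
  also have "\<dots> = poly g x + y * poly h x"
    using poly_sum_le[OF assms(1)] poly_sum_le[of h k] assms(2)
    by (simp add: sum.distrib sum_distrib_left algebra_simps)
  finally show "(case (x, y) of (x, y) \<Rightarrow> poly g x + y * poly h x) = (\<Sum>a\<le>k. \<Sum>b\<le>k - a. c a b * x ^ a * y ^ b)"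
    by simp
qed

lemma is_poly2_formY:
  assumes "degree g \<le> k" "degree h < k"
  shows "is_poly2 k (\<lambda>(x,y). poly g y + x * poly h y)"
  unfolding is_poly2_def
proof (intro exI allI)
  fix x y :: real
  define c where "c a b = (if a = 0 then coeff g b else if a = 1 then coeff h b else 0)" for a b :: nat
  have k1: "1 \<le> k" using assms(2) by simp
  have "(\<Sum>a\<le>k. \<Sum>b\<le>k - a. c a b * x ^ a * y ^ b) = (\<Sum>b\<le>k - 0. c 0 b * x ^ 0 * y ^ b) + (if 1 \<le> k then (\<Sum>b\<le>k - 1. c 1 b * x ^ 1 * y ^ b) else 0)"
    by (subst sum01) (auto simp: c_def)
  also have "\<dots> = poly g y + x * poly h y"
    using poly_sum_le[OF assms(1)] poly_sum_le[of h "k-1"] assms(2) k1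
    by (simp add: c_def sum_distrib_left algebra_simps)
  finally show "(case (x, y) of (x, y) \<Rightarrow> poly g y + x * poly h y) = (\<Sum>a\<le>k. \<Sum>b\<le>k - a. c a b * x ^ a * y ^ b)"
    by simp
qed

lemma has_dx: "((\<lambda>s. \<Sum>a\<le>k. \<Sum>b\<le>k. C a b * s^a * y^b) has_real_derivative
   (\<Sum>a\<le>k. \<Sum>b\<le>k. C a b * (real a * x^(a-1)) * y^b)) (at x)"
  by (intro DERIV_sum derivative_eq_intros) auto

lemma has_dy: "((\<lambda>s. \<Sum>a\<le>k. \<Sum>b\<le>k. C a b * x^a * s^b) has_real_derivative
   (\<Sum>a\<le>k. \<Sum>b\<le>k. C a b * x^a * (real b * y^(b-1)))) (at y)"
  by (intro DERIV_sum derivative_eq_intros) auto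

lemma is_poly2_diffx:
  assumes "is_poly2 k p" shows "(\<lambda>s. p (s,y)) field_differentiable (at x)"
proof -
  obtain C where C: "\<And>x y. p (x,y) = (\<Sum>a\<le>k. \<Sum>b\<le>k. C a b * x^a * y^b)"
    using is_poly2_sq[OF assms] by blast
  show ?thesis unfolding C using has_dx field_differentiable_def by blast
qed

lemma is_poly2_diffy:
  assumes "is_poly2 k p" shows "(\<lambda>s. p (x,s)) field_differentiable (at y)"
proof -
  obtain C where C: "\<And>x y. p (x,y) = (\<Sum>a\<le>k. \<Sum>b\<le>k. C a b * x^a * y^b)"
    using is_poly2_sq[OF assms] by blast
  show ?thesis unfolding C using has_dy field_differentiable_def by blast
qed

lemma vpoly_add: "vpoly k u \<Longrightarrow> vpoly k v \<Longrightarrow> vpoly k (\<lambda>p. u p + v p)"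
  unfolding vpoly_def by (auto intro: is_poly2_add)

lemma vpoly_scale: "vpoly k u \<Longrightarrow> vpoly k (\<lambda>p. r *\<^sub>R u p)"
  unfolding vpoly_def by (auto intro: is_poly2_scale)

lemma vpoly_const: "vpoly k (\<lambda>p. c)"
  unfolding vpoly_def by (auto intro: is_poly2_const)

lemma vpoly_diff: "vpoly k u \<Longrightarrow> vpoly k v \<Longrightarrow> vpoly k (\<lambda>p. u p - v p)"
  using vpoly_add[of k u "\<lambda>p. (-1) *\<^sub>R v p"] vpoly_scale[of k v "-1"] by simp

lemma vpoly_sum: "finite I \<Longrightarrow> (\<And>i. i \<in> I \<Longrightarrow> vpoly k (f i)) \<Longrightarrow> vpoly k (\<lambda>p. \<Sum>i\<in>I. f i p)"
proof (induction I rule: finite_induct)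
  case empty then show ?case using vpoly_const[of k 0] by simp
next
  case (insert x F) then show ?case using vpoly_add[of k "f x" "\<lambda>p. \<Sum>i\<in>F. f i p"] by simp
qed

lemma vpoly_cont: "vpoly k u \<Longrightarrow> continuous_on UNIV u"
proof -
  assume "vpoly k u"
  then have "continuous_on UNIV (\<lambda>p. fst (u p))" "continuous_on UNIV (\<lambda>p. snd (u p))"
    unfolding vpoly_def using is_poly2_cont by blast+
  then have "continuous_on UNIV (\<lambda>p. (fst (u p), snd (u p)))" by (rule continuous_on_Pair)
  then show ?thesis by simp
qed

lemma div_add:
  assumes "vpoly k u" "vpoly k v"
  shows "divergence (\<lambda>p. u p + v p) q = divergence u q + divergence v q"
proof -
  have d: "(\<lambda>s. fst (u (s, y))) field_differentiable (at x)" "(\<lambda>s. fst (v (s, y))) field_differentiable (at x)"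
     "(\<lambda>s. snd (u (x, s))) field_differentiable (at y)" "(\<lambda>s. snd (v (x, s))) field_differentiable (at y)" for x y
    using assms unfolding vpoly_def
    by (auto intro: is_poly2_diffx[where p="\<lambda>p. fst (u p)"] is_poly2_diffx[where p="\<lambda>p. fst (v p)"]
        is_poly2_diffy[where p="\<lambda>p. snd (u p)"] is_poly2_diffy[where p="\<lambda>p. snd (v p)"])
  show ?thesis unfolding divergence_def using d by (simp add: deriv_add)
qed

lemma div_scale:
  assumes "vpoly k u"
  shows "divergence (\<lambda>p. r *\<^sub>R u p) q = r * divergence u q"
proof -
  have d: "(\<lambda>s. fst (u (s, y))) field_differentiable (at x)"
     "(\<lambda>s. snd (u (x, s))) field_differentiable (at y)" for x y
    using assms unfolding vpoly_def
    by (auto intro: is_poly2_diffx[where p="\<lambda>p. fst (u p)"] is_poly2_diffy[where p="\<lambda>p. snd (u p)"])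
  show ?thesis unfolding divergence_def using d by (simp add: deriv_cmult distrib_left)
qed

lemma div_const: "divergence (\<lambda>p. c) q = 0"
  unfolding divergence_def by simp

lemma divfree_add: "vpoly k u \<Longrightarrow> vpoly k v \<Longrightarrow> divfree u \<Longrightarrow> divfree v \<Longrightarrow> divfree (\<lambda>p. u p + v p)"
  unfolding divfree_def by (simp add: div_add)

lemma divfree_scale: "vpoly k u \<Longrightarrow> divfree u \<Longrightarrow> divfree (\<lambda>p. r *\<^sub>R u p)"
  unfolding divfree_def by (simp add: div_scale)

lemma divfree_const: "divfree (\<lambda>p. c)"
  unfolding divfree_def by (simp add: div_const)

lemma divfree_diff: "vpoly k u \<Longrightarrow> vpoly k v \<Longrightarrow> divfree u \<Longrightarrow> divfree v \<Longrightarrow> divfree (\<lambda>p. u p - v p)"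
  using divfree_add[of k u "\<lambda>p. (-1) *\<^sub>R v p"] divfree_scale[of k v "-1"] vpoly_scale[of k v "-1"] by simp

lemma divfree_sum: "finite I \<Longrightarrow> (\<And>i. i \<in> I \<Longrightarrow> vpoly k (f i) \<and> divfree (f i)) \<Longrightarrow> divfree (\<lambda>p. \<Sum>i\<in>I. f i p)"
proof (induction I rule: finite_induct)
  case empty then show ?case using divfree_const[of 0] by simp
next
  case (insert x F) then show ?case
    using divfree_add[of k "f x" "\<lambda>p. \<Sum>i\<in>F. f i p"] vpoly_sum[of F k f] by simp
qed

lemma gam_poly: "\<exists>A B. degree A \<le> 1 \<and> degree B \<le> 1 \<and> (\<forall>t. gam f t = (poly A t, poly B t))"
proof (cases f)
  case Bottom then show ?thesis by (intro exI[of _ "[:0,1:]"] exI[of _ 0]) simp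
next
  case Hyp then show ?thesis by (intro exI[of _ "[:1,-1:]"] exI[of _ "[:0,1:]"]) simp
next
  case Left then show ?thesis by (intro exI[of _ 0] exI[of _ "[:1,-1:]"]) simp
qed

lemma trace_poly:
  assumes "vpoly k u"
  shows "\<exists>P. degree P \<le> k \<and> (\<forall>t. ntrace u f t = poly P t)"
proof -
  obtain A B where AB: "degree A \<le> 1" "degree B \<le> 1" "\<And>t. gam f t = (poly A t, poly B t)"
    using gam_poly by blast
  obtain P1 where P1: "degree P1 \<le> k" "\<And>t. fst (u (poly A t, poly B t)) = poly P1 t"
    using is_poly2_comp_lin[of k "\<lambda>p. fst (u p)" A B] assms AB unfolding vpoly_def by blast
  obtain P2 where P2: "degree P2 \<le> k" "\<And>t. snd (u (poly A t, poly B t)) = poly P2 t"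
    using is_poly2_comp_lin[of k "\<lambda>p. snd (u p)" A B] assms AB unfolding vpoly_def by blast
  define P where "P = smult (fst (nout f)) P1 + smult (snd (nout f)) P2"
  have "degree P \<le> k" unfolding P_def using P1 P2
    by (metis degree_add_le degree_smult_le order.trans)
  moreover have "ntrace u f t = poly P t" for t
  proof -
    have "ntrace u f t = fst (u (gam f t)) * fst (nout f) + snd (u (gam f t)) * snd (nout f)"
      unfolding ntrace_def by (cases "u (gam f t)", cases "nout f") simp
    then show ?thesis unfolding P_def AB(3) P1 P2 by simp
  qed
  ultimately show ?thesis by blast
qed

type_synonym fld = "real \<times> real \<Rightarrow> real \<times> real"

lemma integral_cmult_real: "integral S (\<lambda>x. c * f x) = c * integral S (f :: 'a::euclidean_space \<Rightarrow> real)"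
  using integral_cmul[of S c f] by simp

lemma Khat_compact: "compact Khat"
proof -
  have eq: "Khat = {p. 0 \<le> fst p} \<inter> {p. 0 \<le> snd p} \<inter> {p. fst p + snd p \<le> 1}"
    unfolding Khat_def by auto
  have "closed Khat" unfolding eq
    by (intro closed_Int closed_Collect_le continuous_intros)
  moreover have "bounded Khat"
  proof -
    have "Khat \<subseteq> cbox (0,0) (1,1)" unfolding Khat_def by (auto simp: cbox_Pair_iff)
    then show ?thesis by (metis bounded_cbox bounded_subset)
  qed
  ultimately show ?thesis by (simp add: compact_eq_bounded_closed)
qed

lemma cont_int_Khat:
  fixes f :: "real \<times> real \<Rightarrow> real"
  assumes "continuous_on UNIV f"
  shows "f integrable_on Khat"
proof -
  have "set_integrable lborel Khat f"
    unfolding set_integrable_def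
    by (rule borel_integrable_compact[OF Khat_compact]) (use assms continuous_on_subset in blast)
  then show ?thesis by (rule set_borel_integral_eq_integral(1))
qed

definition cont :: "fld \<Rightarrow> bool" where "cont u \<longleftrightarrow> continuous_on UNIV u"

lemma cont_inner_int: "cont u \<Longrightarrow> cont v \<Longrightarrow> (\<lambda>p. u p \<bullet> v p) integrable_on Khat"
  unfolding cont_def by (intro cont_int_Khat continuous_on_inner)

lemma L2K_add_left: "cont u \<Longrightarrow> cont v \<Longrightarrow> cont w \<Longrightarrow> L2K (\<lambda>p. u p + v p) w = L2K u w + L2K v w"
  unfolding L2K_def by (simp add: inner_add_left integral_add cont_inner_int)

lemma L2K_scale_left: "L2K (\<lambda>p. r *\<^sub>R u p) w = r * L2K u w"
  unfolding L2K_def by (simp add: integral_cmult_real)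

lemma L2K_sym: "L2K u w = L2K w u"
  unfolding L2K_def by (simp add: inner_commute)

lemma L2K_diff_left: "cont u \<Longrightarrow> cont v \<Longrightarrow> cont w \<Longrightarrow> L2K (\<lambda>p. u p - v p) w = L2K u w - L2K v w"
  unfolding L2K_def by (simp add: inner_diff_left integral_diff cont_inner_int)

lemma L2K_add_right: "cont u \<Longrightarrow> cont v \<Longrightarrow> cont w \<Longrightarrow> L2K w (\<lambda>p. u p + v p) = L2K w u + L2K w v"
  using L2K_add_left L2K_sym by metis

lemma L2K_scale_right: "L2K w (\<lambda>p. r *\<^sub>R u p) = r * L2K w u"
  using L2K_scale_left L2K_sym by metis

lemma L2K_nonneg: "cont u \<Longrightarrow> 0 \<le> L2K u u"
  unfolding L2K_def by (intro integral_nonneg cont_inner_int) auto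

lemma cont_add: "cont u \<Longrightarrow> cont v \<Longrightarrow> cont (\<lambda>p. u p + v p)"
  unfolding cont_def by (intro continuous_intros)
lemma cont_diff: "cont u \<Longrightarrow> cont v \<Longrightarrow> cont (\<lambda>p. u p - v p)"
  unfolding cont_def by (intro continuous_intros)
lemma cont_scale: "cont u \<Longrightarrow> cont (\<lambda>p. r *\<^sub>R u p)"
  unfolding cont_def by (intro continuous_intros)
lemma cont_zero: "cont (\<lambda>p. 0)"
  unfolding cont_def by (intro continuous_intros)

lemma L2K_CS:
  assumes "cont x" "cont y" "L2K y y = 0"
  shows "L2K x y = 0"
proof (rule ccontr)
  assume ne: "L2K x y \<noteq> 0"
  have ex: "L2K (\<lambda>p. x p + r *\<^sub>R y p) (\<lambda>p. x p + r *\<^sub>R y p) = L2K x x + 2 * r * L2K x y + r^2 * L2K y y" for r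
  proof -
    have c1: "cont (\<lambda>p. r *\<^sub>R y p)" by (rule cont_scale[OF assms(2)])
    have c2: "cont (\<lambda>p. x p + r *\<^sub>R y p)" by (rule cont_add[OF assms(1) c1])
    have "L2K (\<lambda>p. x p + r *\<^sub>R y p) (\<lambda>p. x p + r *\<^sub>R y p)
        = L2K x (\<lambda>p. x p + r *\<^sub>R y p) + r * L2K y (\<lambda>p. x p + r *\<^sub>R y p)"
      using L2K_add_left[OF assms(1) c1 c2] L2K_scale_left by simp
    also have "\<dots> = L2K x x + r * L2K x y + r * (L2K y x + r * L2K y y)"
      using L2K_add_right[OF assms(1) c1] L2K_add_right[OF assms(1) c1, of y] assms L2K_scale_right
      by simp
    finally show ?thesis using L2K_sym[of x y] by (simp add: power2_eq_square algebra_simps)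
  qed
  define r where "r = - (L2K x x + 1) / (2 * L2K x y)"
  have "0 \<le> L2K (\<lambda>p. x p + r *\<^sub>R y p) (\<lambda>p. x p + r *\<^sub>R y p)"
    by (intro L2K_nonneg cont_add cont_scale assms)
  also have "\<dots> = L2K x x + 2 * r * L2K x y" using ex assms(3) by simp
  also have "\<dots> = -1" unfolding r_def using ne by (simp add: field_simps)
  finally show False by simp
qed

inductive_set lspan :: "fld set \<Rightarrow> fld set" for B where
  lz: "(\<lambda>p. 0) \<in> lspan B"
| lb: "b \<in> B \<Longrightarrow> b \<in> lspan B"
| la: "f \<in> lspan B \<Longrightarrow> g \<in> lspan B \<Longrightarrow> (\<lambda>p. f p + g p) \<in> lspan B"
| ls: "f \<in> lspan B \<Longrightarrow> (\<lambda>p. r *\<^sub>R f p) \<in> lspan B"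

definition subsp :: "fld set \<Rightarrow> bool" where
  "subsp S \<longleftrightarrow> (\<lambda>p. 0) \<in> S \<and> (\<forall>f\<in>S. \<forall>g\<in>S. (\<lambda>p. f p + g p) \<in> S) \<and> (\<forall>r. \<forall>f\<in>S. (\<lambda>p. r *\<^sub>R f p) \<in> S)"

lemma subsp_diff: "subsp S \<Longrightarrow> f \<in> S \<Longrightarrow> g \<in> S \<Longrightarrow> (\<lambda>p. f p - g p) \<in> S"
proof -
  assume a: "subsp S" "f \<in> S" "g \<in> S"
  have add: "\<And>f g. f \<in> S \<Longrightarrow> g \<in> S \<Longrightarrow> (\<lambda>p. f p + g p) \<in> S" using a(1) unfolding subsp_def by blast
  have sc: "\<And>r f. f \<in> S \<Longrightarrow> (\<lambda>p. r *\<^sub>R f p) \<in> S" using a(1) unfolding subsp_def by blast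
  show ?thesis using add[OF a(2) sc[OF a(3), of "-1"]] by simp
qed

lemma lspan_sub: assumes "subsp S" "B \<subseteq> S" shows "lspan B \<subseteq> S"
proof
  fix f assume "f \<in> lspan B"
  then show "f \<in> S" using assms by (induction rule: lspan.induct) (auto simp: subsp_def)
qed

lemma lspan_subsp: "subsp (lspan B)"
  unfolding subsp_def by (auto intro: lspan.intros)

lemma lspan_mono: "B \<subseteq> B' \<Longrightarrow> lspan B \<subseteq> lspan B'"
  by (intro lspan_sub lspan_subsp) (auto intro: lspan.intros)

lemma lspan_diff: "f \<in> lspan B \<Longrightarrow> g \<in> lspan B \<Longrightarrow> (\<lambda>p. f p - g p) \<in> lspan B"
  by (rule subsp_diff[OF lspan_subsp])

lemma lspan_sum: "finite I \<Longrightarrow> (\<And>i. i \<in> I \<Longrightarrow> f i \<in> lspan B) \<Longrightarrow> (\<lambda>p. \<Sum>i\<in>I. f i p) \<in> lspan B"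
proof (induction I rule: finite_induct)
  case empty then show ?case by (simp add: lz)
next
  case (insert x F) then show ?case using la[of "f x" B "\<lambda>p. \<Sum>i\<in>F. f i p"] by simp
qed

lemma lspan_break:
  assumes "f \<in> lspan (insert t T)"
  shows "\<exists>a. (\<lambda>p. f p - a *\<^sub>R t p) \<in> lspan T"
  using assms
proof (induction rule: lspan.induct)
  case lz then show ?case by (intro exI[of _ 0]) (simp add: lspan.lz)
next
  case (lb b)
  show ?case
  proof (cases "b = t")
    case True then show ?thesis by (intro exI[of _ 1]) (simp add: lspan.lz)
  next
    case False then show ?thesis using lb by (intro exI[of _ 0]) (auto intro: lspan.lb)
  qed
next
  case (la f g)
  then obtain a1 a2 where "(\<lambda>p. f p - a1 *\<^sub>R t p) \<in> lspan T" "(\<lambda>p. g p - a2 *\<^sub>R t p) \<in> lspan T" by blast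
  then have "(\<lambda>p. (f p - a1 *\<^sub>R t p) + (g p - a2 *\<^sub>R t p)) \<in> lspan T" by (rule lspan.la)
  then show ?case by (intro exI[of _ "a1 + a2"]) (simp add: algebra_simps scaleR_add_left)
next
  case (ls f r)
  then obtain a where "(\<lambda>p. f p - a *\<^sub>R t p) \<in> lspan T" by blast
  then have "(\<lambda>p. r *\<^sub>R (f p - a *\<^sub>R t p)) \<in> lspan T" by (rule lspan.ls)
  then show ?case by (intro exI[of _ "r * a"]) (simp add: algebra_simps)
qed

lemma lspan_cont: assumes "\<And>b. b \<in> B \<Longrightarrow> cont b" "f \<in> lspan B" shows "cont f"
  using assms(2) by (induction rule: lspan.induct) (auto intro: cont_add cont_scale cont_zero assms(1))

lemma finite_basis:
  assumes "finite T" "subsp S" "S \<subseteq> lspan T"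
  shows "\<exists>B. finite B \<and> B \<subseteq> S \<and> S \<subseteq> lspan B"
  using assms
proof (induction T arbitrary: S rule: finite_induct)
  case empty then show ?case by (intro exI[of _ "{}"]) auto
next
  case (insert t T)
  show ?case
  proof (cases "S \<subseteq> lspan T")
    case True then show ?thesis using insert by blast
  next
    case False
    then obtain s0 where s0: "s0 \<in> S" "s0 \<notin> lspan T" by blast
    obtain a0 where a0: "(\<lambda>p. s0 p - a0 *\<^sub>R t p) \<in> lspan T"
      using lspan_break s0 insert.prems by blast
    have a0ne: "a0 \<noteq> 0" using a0 s0 by auto
    define S' where "S' = S \<inter> lspan T"
    have "subsp S'" using insert.prems(1) lspan_subsp[of T] unfolding S'_def subsp_def by auto
    then obtain B' where B': "finite B'" "B' \<subseteq> S'" "S' \<subseteq> lspan B'"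
      using insert.IH[of S'] unfolding S'_def by blast
    have "S \<subseteq> lspan (insert s0 B')"
    proof
      fix s assume s: "s \<in> S"
      then obtain \<beta> where \<beta>: "(\<lambda>p. s p - \<beta> *\<^sub>R t p) \<in> lspan T"
        using lspan_break insert.prems(2) by blast
      define s' where "s' = (\<lambda>p. s p - (\<beta>/a0) *\<^sub>R s0 p)"
      have "s' \<in> S" unfolding s'_def
        using insert.prems(1) s s0(1) by (intro subsp_diff) (auto simp: subsp_def)
      moreover have "s' = (\<lambda>p. (s p - \<beta> *\<^sub>R t p) - (\<beta>/a0) *\<^sub>R (s0 p - a0 *\<^sub>R t p))"
        unfolding s'_def using a0ne by (auto simp: algebra_simps)
      then have "s' \<in> lspan T"
        using lspan_diff[OF \<beta> lspan.ls[OF a0, of "\<beta>/a0"]] by simp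
      ultimately have "s' \<in> lspan B'" using B' S'_def by blast
      then have "s' \<in> lspan (insert s0 B')" using lspan_mono[of B' "insert s0 B'"] by blast
      moreover have "(\<lambda>p. (\<beta>/a0) *\<^sub>R s0 p) \<in> lspan (insert s0 B')" by (intro lspan.ls lspan.lb) simp
      ultimately have "(\<lambda>p. s' p + (\<beta>/a0) *\<^sub>R s0 p) \<in> lspan (insert s0 B')" by (rule lspan.la)
      then show "s \<in> lspan (insert s0 B')" unfolding s'_def by simp
    qed
    then show ?thesis using B' s0 S'_def by (intro exI[of _ "insert s0 B'"]) auto
  qed
qed

lemma orth_lspan:
  assumes "cont x" "\<And>b. b \<in> B \<Longrightarrow> cont b" "\<And>b. b \<in> B \<Longrightarrow> L2K x b = 0" "f \<in> lspan B"
  shows "L2K x f = 0"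
  using assms(4)
proof (induction rule: lspan.induct)
  case lz then show ?case by (simp add: L2K_def)
next
  case (lb b) then show ?case using assms(3) by simp
next
  case (la f g) then show ?case
    using L2K_add_right[OF lspan_cont[OF assms(2)] lspan_cont[OF assms(2)] assms(1)] by simp
next
  case (ls f r) then show ?case by (simp add: L2K_scale_right)
qed

lemma projection:
  assumes "finite B" "\<And>b. b \<in> B \<Longrightarrow> cont b" "cont u"
  shows "\<exists>s\<in>lspan B. \<forall>b\<in>B. L2K (\<lambda>p. u p - s p) b = 0"
  using assms
proof (induction B arbitrary: u rule: finite_induct)
  case empty then show ?case by (auto intro: lspan.lz)
next
  case (insert b B)
  have cB: "\<And>c. c \<in> B \<Longrightarrow> cont c" using insert.prems by auto
  have cb: "cont b" using insert.prems by auto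
  obtain s1 where s1: "s1 \<in> lspan B" "\<forall>c\<in>B. L2K (\<lambda>p. u p - s1 p) c = 0"
    using insert.IH[OF cB insert.prems(2)] by blast
  obtain s2 where s2: "s2 \<in> lspan B" "\<forall>c\<in>B. L2K (\<lambda>p. b p - s2 p) c = 0"
    using insert.IH[OF cB cb] by blast
  define b' where "b' = (\<lambda>p. b p - s2 p)"
  define x where "x = (\<lambda>p. u p - s1 p)"
  have cs1: "cont s1" "cont s2" using s1 s2 lspan_cont[OF cB] by auto
  have cb': "cont b'" unfolding b'_def by (intro cont_diff cb cs1)
  have cx: "cont x" unfolding x_def by (intro cont_diff insert.prems cs1)
  define \<tau> where "\<tau> = (if L2K b' b' = 0 then 0 else L2K x b' / L2K b' b')"
  define s where "s = (\<lambda>p. s1 p + \<tau> *\<^sub>R b' p)"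
  have m: "s1 \<in> lspan (insert b B)" "s2 \<in> lspan (insert b B)" "b \<in> lspan (insert b B)"
    using lspan_mono[of B "insert b B"] s1 s2 by (auto intro: lspan.lb)
  have sin: "s \<in> lspan (insert b B)" unfolding s_def b'_def
    by (intro lspan.la lspan.ls lspan_diff m)
  have us: "(\<lambda>p. u p - s p) = (\<lambda>p. x p - \<tau> *\<^sub>R b' p)" unfolding s_def x_def by (auto simp: algebra_simps)
  have cy: "cont (\<lambda>p. x p - \<tau> *\<^sub>R b' p)" by (intro cont_diff cont_scale cx cb')
  have oB: "L2K (\<lambda>p. x p - \<tau> *\<^sub>R b' p) c = 0" if "c \<in> B" for c
  proof -
    have "L2K (\<lambda>p. x p - \<tau> *\<^sub>R b' p) c = L2K x c - \<tau> * L2K b' c"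
      using L2K_diff_left[OF cx cont_scale[OF cb'] cB[OF that]] L2K_scale_left by simp
    then show ?thesis using s1(2) s2(2) that unfolding x_def b'_def by simp
  qed
  have ob': "L2K (\<lambda>p. x p - \<tau> *\<^sub>R b' p) b' = 0"
  proof -
    have e: "L2K (\<lambda>p. x p - \<tau> *\<^sub>R b' p) b' = L2K x b' - \<tau> * L2K b' b'"
      using L2K_diff_left[OF cx cont_scale[OF cb'] cb'] L2K_scale_left by simp
    show ?thesis
    proof (cases "L2K b' b' = 0")
      case True then show ?thesis using e L2K_CS[OF cx cb'] \<tau>_def by simp
    next
      case False then show ?thesis using e \<tau>_def by simp
    qed
  qed
  have os2: "L2K (\<lambda>p. x p - \<tau> *\<^sub>R b' p) s2 = 0"
    by (rule orth_lspan[OF cy cB oB s2(1)])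
  have "b = (\<lambda>p. b' p + s2 p)" unfolding b'_def by auto
  then have ob: "L2K (\<lambda>p. x p - \<tau> *\<^sub>R b' p) b = 0"
    using L2K_add_right[OF cb' cs1(2) cy] ob' os2 by simp
  show ?case
  proof (rule bexI[OF _ sin])
    show "\<forall>c\<in>insert b B. L2K (\<lambda>p. u p - s p) c = 0" unfolding us using ob oB by auto
  qed
qed

lemma ftc01:
  fixes F f :: "real \<Rightarrow> real"
  assumes "\<And>t. (F has_real_derivative f t) (at t)"
  shows "integral {0..1} f = F 1 - F 0"
proof -
  have "(f has_integral (F 1 - F 0)) {0..1}"
    by (rule fundamental_theorem_of_calculus[of 0 1 F f])
       (auto intro!: has_real_derivative_iff_has_vector_derivative[THEN iffD1] DERIV_subset[OF assms])
  then show ?thesis by (rule integral_unique)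
qed

lemma dterm_x: "((\<lambda>s. H * y^Suc b - G * s^Suc a * y^b) has_real_derivative (-(G * (real (Suc a) * s^a) * y^b))) (at s)"
  apply (rule derivative_eq_intros refl)+
  apply simp
  done
lemma dterm_y: "((\<lambda>s. H * s^Suc b - G * x^Suc a * s^b) has_real_derivative (H * (real (Suc b) * s^b) - G * x^Suc a * (real b * s^(b-1)))) (at s)"
  apply (rule derivative_eq_intros refl)+
  apply simp
  done
lemma dterm_h: "((\<lambda>t. H * t^Suc b - G * (1-t)^Suc a * t^b) has_real_derivative (H * (real (Suc b) * t^b) - G * (1-t)^Suc a * (real b * t^(b-1)) + G * (real (Suc a) * (1-t)^a) * t^b)) (at t)"
  apply (rule derivative_eq_intros refl)+
  apply (simp add: algebra_simps)
  done
lemma dterm_py: "((\<lambda>s. (H * (real (Suc b) * y^b) - G * s^Suc a * (real b * y^(b-1))) - C1 * s^a * y^b) has_real_derivative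
   (- (G * (real (Suc a) * s^a) * (real b * y^(b-1))) - C1 * (real a * s^(a-1)) * y^b)) (at s)"
  apply (rule derivative_eq_intros refl)+
  apply simp
  done

lemma GSuc: "C / real (Suc a) * (real (Suc a) * z) = (C::real) * z"
  by (simp del: of_nat_Suc)

lemma flux_zero:
  assumes "vpoly k u" "divfree u"
  shows "(\<Sum>f\<in>edges. elen f * integral {0..1} (\<lambda>t. ntrace u f t)) = 0"
proof -
  obtain C1 where C1: "\<And>x y. fst (u (x,y)) = (\<Sum>a\<le>k. \<Sum>b\<le>k. C1 a b * x^a * y^b)"
    using is_poly2_sq[of k "\<lambda>p. fst (u p)"] assms(1) unfolding vpoly_def by auto
  obtain C2 where C2: "\<And>x y. snd (u (x,y)) = (\<Sum>a\<le>k. \<Sum>b\<le>k. C2 a b * x^a * y^b)"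
    using is_poly2_sq[of k "\<lambda>p. snd (u p)"] assms(1) unfolding vpoly_def by auto
  define E where "E a b = (if a = 0 then C1 a b else 0)" for a b :: nat
  define H where "H a b = E a b / real (Suc b)" for a b :: nat
  define G where "G a b = C2 a b / real (Suc a)" for a b :: nat
  define \<Psi> where "\<Psi> x y = (\<Sum>a\<le>k. \<Sum>b\<le>k. H a b * y^Suc b - G a b * x^Suc a * y^b)" for x y :: real
  define Py where "Py x y = (\<Sum>a\<le>k. \<Sum>b\<le>k. H a b * (real (Suc b) * y^b) - G a b * x^Suc a * (real b * y^(b-1)))" for x y :: real
  have div0: "(\<Sum>a\<le>k. \<Sum>b\<le>k. C1 a b * (real a * x^(a-1)) * y^b) + (\<Sum>a\<le>k. \<Sum>b\<le>k. C2 a b * x^a * (real b * y^(b-1))) = 0" for x y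
  proof -
    have "divergence u (x,y) = 0" using assms(2) unfolding divfree_def by blast
    moreover have "(\<lambda>s. fst (u (s, y))) = (\<lambda>s. \<Sum>a\<le>k. \<Sum>b\<le>k. C1 a b * s^a * y^b)" using C1 by auto
    moreover have "(\<lambda>s. snd (u (x, s))) = (\<lambda>s. \<Sum>a\<le>k. \<Sum>b\<le>k. C2 a b * x^a * s^b)" using C2 by auto
    ultimately show ?thesis unfolding divergence_def
      by (simp add: DERIV_imp_deriv[OF has_dx] DERIV_imp_deriv[OF has_dy])
  qed
  have dX: "((\<lambda>s. \<Psi> s y) has_real_derivative - snd (u (s, y))) (at s)" for s y
  proof -
    have "((\<lambda>s. \<Psi> s y) has_real_derivative (\<Sum>a\<le>k. \<Sum>b\<le>k. -(G a b * (real (Suc a) * s^a) * y^b))) (at s)"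
      unfolding \<Psi>_def by (intro DERIV_sum dterm_x)
    moreover have "(\<Sum>a\<le>k. \<Sum>b\<le>k. -(G a b * (real (Suc a) * s^a) * y^b)) = - snd (u (s, y))"
      unfolding C2 G_def by (simp add: sum_negf GSuc del: of_nat_Suc)
    ultimately show ?thesis by simp
  qed
  have dY: "((\<lambda>s. \<Psi> x s) has_real_derivative Py x s) (at s)" for x s
    unfolding \<Psi>_def Py_def by (intro DERIV_sum dterm_y)
  have dH: "((\<lambda>t. \<Psi> (1-t) t) has_real_derivative Py (1-t) t + snd (u (1-t, t))) (at t)" for t
  proof -
    have "((\<lambda>t. \<Psi> (1-t) t) has_real_derivative (\<Sum>a\<le>k. \<Sum>b\<le>k. H a b * (real (Suc b) * t^b) - G a b * (1-t)^Suc a * (real b * t^(b-1)) + G a b * (real (Suc a) * (1-t)^a) * t^b)) (at t)"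
      unfolding \<Psi>_def by (intro DERIV_sum dterm_h)
    moreover have "(\<Sum>a\<le>k. \<Sum>b\<le>k. H a b * (real (Suc b) * t^b) - G a b * (1-t)^Suc a * (real b * t^(b-1)) + G a b * (real (Suc a) * (1-t)^a) * t^b)
       = Py (1-t) t + snd (u (1-t, t))"
      unfolding C2 Py_def G_def by (simp add: sum.distrib GSuc del: of_nat_Suc)
    ultimately show ?thesis by simp
  qed
  have PyU: "Py x y = fst (u (x,y))" for x y
  proof -
    have d: "((\<lambda>s. Py s y - fst (u (s,y))) has_real_derivative 0) (at s)" for s
    proof -
      have "((\<lambda>s. Py s y - fst (u (s,y))) has_real_derivative
          (\<Sum>a\<le>k. \<Sum>b\<le>k. - (G a b * (real (Suc a) * s^a) * (real b * y^(b-1))) - C1 a b * (real a * s^(a-1)) * y^b)) (at s)"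
        unfolding Py_def C1 sum_subtractf[symmetric] by (intro DERIV_sum dterm_py)
      moreover have "(\<Sum>a\<le>k. \<Sum>b\<le>k. - (G a b * (real (Suc a) * s^a) * (real b * y^(b-1))) - C1 a b * (real a * s^(a-1)) * y^b) = 0"
        using div0[of s y] unfolding G_def by (simp add: sum_subtractf sum_negf GSuc mult.assoc del: of_nat_Suc)
      ultimately show ?thesis by simp
    qed
    have "Py x y - fst (u (x,y)) = Py 0 y - fst (u (0,y))"
      using DERIV_isconst_all[of "\<lambda>s. Py s y - fst (u (s,y))"] d by blast
    also have "\<dots> = 0"
    proof -
      have "Py 0 y = (\<Sum>a\<le>k. \<Sum>b\<le>k. E a b * y^b)"
        unfolding Py_def H_def by (simp add: GSuc del: of_nat_Suc)
      also have "\<dots> = (\<Sum>a\<le>k. if a = 0 then (\<Sum>b\<le>k. C1 0 b * y^b) else 0)"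
        by (rule sum.cong) (auto simp: E_def)
      also have "\<dots> = (\<Sum>b\<le>k. C1 0 b * y^b)" by simp
      finally have "Py 0 y = (\<Sum>b\<le>k. C1 0 b * y^b)" .
      moreover have "fst (u (0,y)) = (\<Sum>b\<le>k. C1 0 b * y^b)"
      proof -
        have "fst (u (0,y)) = (\<Sum>a\<le>k. if a = 0 then (\<Sum>b\<le>k. C1 0 b * y^b) else 0)"
          unfolding C1 by (rule sum.cong) (auto simp: power_0_left)
        then show ?thesis by simp
      qed
      ultimately show ?thesis by simp
    qed
    finally show ?thesis by simp
  qed
  have iB: "integral {0..1} (\<lambda>t. ntrace u Bottom t) = \<Psi> 1 0 - \<Psi> 0 0"
  proof -
    have "integral {0..1} (\<lambda>t. ntrace u Bottom t) = integral {0..1} (\<lambda>t. - snd (u (t,0)))"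
      unfolding ntrace_def by (rule integral_cong) (simp add: inner_prod_def)
    also have "\<dots> = \<Psi> 1 0 - \<Psi> 0 0" by (rule ftc01[of "\<lambda>t. \<Psi> t 0"]) (rule dX)
    finally show ?thesis .
  qed
  have iL: "integral {0..1} (\<lambda>t. ntrace u Left t) = \<Psi> 0 0 - \<Psi> 0 1"
  proof -
    have "integral {0..1} (\<lambda>t. ntrace u Left t) = integral {0..1} (\<lambda>t. - fst (u (0,1-t)))"
      unfolding ntrace_def by (rule integral_cong) (simp add: inner_prod_def)
    also have "\<dots> = \<Psi> 0 (1-1) - \<Psi> 0 (1-0)"
    proof (rule ftc01[of "\<lambda>t. \<Psi> 0 (1-t)"])
      fix t :: real
      have "((\<lambda>t. \<Psi> 0 (1-t)) has_real_derivative Py 0 (1-t) * (-1)) (at t)"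
        by (rule DERIV_chain'[of "\<lambda>t. 1-t" "-1" t UNIV "\<lambda>s. \<Psi> 0 s"]) (auto intro!: derivative_eq_intros dY)
      then show "((\<lambda>t. \<Psi> 0 (1-t)) has_real_derivative - fst (u (0, 1-t))) (at t)" by (simp add: PyU)
    qed
    finally show ?thesis by simp
  qed
  have iH: "integral {0..1} (\<lambda>t. ntrace u Hyp t) = (\<Psi> 0 1 - \<Psi> 1 0) / sqrt 2"
  proof -
    have "integral {0..1} (\<lambda>t. ntrace u Hyp t) = integral {0..1} (\<lambda>t. (1/sqrt 2) * (Py (1-t) t + snd (u (1-t, t))))"
      unfolding ntrace_def by (rule integral_cong) (simp add: inner_prod_def PyU algebra_simps)
    also have "\<dots> = (1/sqrt 2) * integral {0..1} (\<lambda>t. Py (1-t) t + snd (u (1-t, t)))"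
      by (rule integral_cmult_real)
    also have "integral {0..1} (\<lambda>t. Py (1-t) t + snd (u (1-t, t))) = \<Psi> (1-1) 1 - \<Psi> (1-0) 0"
      by (rule ftc01[of "\<lambda>t. \<Psi> (1-t) t"]) (rule dH)
    finally show ?thesis by simp
  qed
  show ?thesis unfolding edges_def using iB iL iH by simp
qed

lemma key_id:
  fixes D :: "real poly"
  assumes "G = [:0,1:] * D"
  shows "poly (pderiv ([:0,1,-1:] * D)) s = (1-s) * poly (pderiv G) s - poly G s"
proof -
  have "[:0,1,-1:] * D = [:1,-1:] * G" unfolding assms by (simp add: algebra_simps)
  then have eq: "pderiv ([:0,1,-1:] * D) = [:1,-1:] * pderiv G + G * pderiv [:1,-1:]"
    by (simp only: pderiv_mult)
  show ?thesis unfolding eq by (simp add: pderiv_pCons algebra_simps)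
qed

definition uB :: "real poly \<Rightarrow> real poly \<Rightarrow> fld" where
  "uB G S = (\<lambda>(x,y). (- poly G x, - poly S x + y * poly (pderiv G) x))"
definition uL :: "real poly \<Rightarrow> real poly \<Rightarrow> fld" where
  "uL G S = (\<lambda>(x,y). (poly S y - x * poly (pderiv G) y, poly G y))"
definition uH :: "real poly \<Rightarrow> fld" where
  "uH G = (\<lambda>(x,y). (x * poly (pderiv G) y, - poly G y))"

lemma deriv_eq: "(\<And>s. f s = g s) \<Longrightarrow> (g has_real_derivative D) (at x) \<Longrightarrow> deriv f x = D"
  by (metis DERIV_imp_deriv ext)

lemma dpoly: "DERIV (\<lambda>x. poly p x) x :> poly (pderiv p) x"
  by (rule poly_DERIV)

locale Gassm =
  fixes k :: nat and G S :: "real poly"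
  assumes dG: "degree G \<le> k" and dG': "degree (pderiv G) < k" and dS: "degree S \<le> k"
    and G0: "poly G 0 = 0"
    and GS: "\<And>s. (1-s) * poly (pderiv G) s - poly G s = poly S s"
begin

lemma uB_props:
  shows "vpoly k (uB G S)" "divfree (uB G S)"
    "ntrace (uB G S) Bottom t = poly S t" "ntrace (uB G S) Left t = 0" "ntrace (uB G S) Hyp t = 0"
proof -
  have "is_poly2 k (\<lambda>(x,y). poly (-G) x + y * poly 0 x)"
    by (rule is_poly2_formX) (use dG dG' in auto)
  moreover have "is_poly2 k (\<lambda>(x,y). poly (-S) x + y * poly (pderiv G) x)"
    by (rule is_poly2_formX) (use dS dG' in auto)
  ultimately show "vpoly k (uB G S)" unfolding vpoly_def uB_def
    by (simp add: case_prod_unfold)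
  have d1: "deriv (\<lambda>s. fst (uB G S (s,y))) x = - poly (pderiv G) x" for x y
    by (rule deriv_eq[where g="\<lambda>s. - poly G s"]) (simp add: uB_def, auto intro!: derivative_eq_intros dpoly)
  have d2: "deriv (\<lambda>s. snd (uB G S (x,s))) y = poly (pderiv G) x" for x y
    by (rule deriv_eq[where g="\<lambda>s. - poly S x + s * poly (pderiv G) x"]) (simp add: uB_def, auto intro!: derivative_eq_intros dpoly)
  show "divfree (uB G S)" unfolding divfree_def divergence_def
    using d1 d2 by (simp add: case_prod_unfold)
  show "ntrace (uB G S) Bottom t = poly S t" unfolding ntrace_def uB_def by (simp add: inner_prod_def)
  show "ntrace (uB G S) Left t = 0" unfolding ntrace_def uB_def using G0 by (simp add: inner_prod_def)
  have i: "t * poly (pderiv G) (1-t) - poly G (1-t) - poly S (1-t) = 0" using GS[of "1-t"] by simp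
  show "ntrace (uB G S) Hyp t = 0"
    unfolding ntrace_def uB_def using i by (simp add: inner_prod_def field_simps)
qed

lemma uL_props:
  shows "vpoly k (uL G S)" "divfree (uL G S)"
    "ntrace (uL G S) Left t = - poly S (1-t)" "ntrace (uL G S) Bottom t = 0" "ntrace (uL G S) Hyp t = 0"
proof -
  have "is_poly2 k (\<lambda>(x,y). poly S y + x * poly (- pderiv G) y)"
    by (rule is_poly2_formY) (use dS dG' in auto)
  moreover have "is_poly2 k (\<lambda>(x,y). poly G y + x * poly 0 y)"
    by (rule is_poly2_formY) (use dG dG' in auto)
  ultimately show "vpoly k (uL G S)" unfolding vpoly_def uL_def
    by (simp add: case_prod_unfold)
  have d1: "deriv (\<lambda>s. fst (uL G S (s,y))) x = - poly (pderiv G) y" for x y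
    by (rule deriv_eq[where g="\<lambda>s. poly S y - s * poly (pderiv G) y"]) (simp add: uL_def, auto intro!: derivative_eq_intros dpoly)
  have d2: "deriv (\<lambda>s. snd (uL G S (x,s))) y = poly (pderiv G) y" for x y
    by (rule deriv_eq[where g="\<lambda>s. poly G s"]) (simp add: uL_def, auto intro!: derivative_eq_intros dpoly)
  show "divfree (uL G S)" unfolding divfree_def divergence_def
    using d1 d2 by (simp add: case_prod_unfold)
  show "ntrace (uL G S) Left t = - poly S (1-t)" unfolding ntrace_def uL_def by (simp add: inner_prod_def)
  show "ntrace (uL G S) Bottom t = 0" unfolding ntrace_def uL_def using G0 by (simp add: inner_prod_def)
  have i: "poly S t - (1-t) * poly (pderiv G) t + poly G t = 0" using GS[of t] by simp
  show "ntrace (uL G S) Hyp t = 0"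
    unfolding ntrace_def uL_def using i by (simp add: inner_prod_def field_simps)
qed

lemma uH_props:
  shows "vpoly k (uH G)" "divfree (uH G)"
    "ntrace (uH G) Hyp t = poly S t / sqrt 2" "ntrace (uH G) Bottom t = 0" "ntrace (uH G) Left t = 0"
proof -
  have "is_poly2 k (\<lambda>(x,y). poly 0 y + x * poly (pderiv G) y)"
    by (rule is_poly2_formY) (use dG dG' in auto)
  moreover have "is_poly2 k (\<lambda>(x,y). poly (-G) y + x * poly 0 y)"
    by (rule is_poly2_formY) (use dG dG' in auto)
  ultimately show "vpoly k (uH G)" unfolding vpoly_def uH_def
    by (simp add: case_prod_unfold)
  have d1: "deriv (\<lambda>s. fst (uH G (s,y))) x = poly (pderiv G) y" for x y
    by (rule deriv_eq[where g="\<lambda>s. s * poly (pderiv G) y"]) (simp add: uH_def, auto intro!: derivative_eq_intros dpoly)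
  have d2: "deriv (\<lambda>s. snd (uH G (x,s))) y = - poly (pderiv G) y" for x y
    by (rule deriv_eq[where g="\<lambda>s. - poly G s"]) (simp add: uH_def, auto intro!: derivative_eq_intros dpoly)
  show "divfree (uH G)" unfolding divfree_def divergence_def
    using d1 d2 by (simp add: case_prod_unfold)
  have i: "(1-t) * poly (pderiv G) t - poly G t = poly S t" using GS[of t] by simp
  have "ntrace (uH G) Hyp t = ((1-t) * poly (pderiv G) t - poly G t) / sqrt 2"
    unfolding ntrace_def uH_def by (simp add: inner_prod_def) (simp add: divide_inverse algebra_simps)
  then show "ntrace (uH G) Hyp t = poly S t / sqrt 2" using i by simp
  show "ntrace (uH G) Bottom t = 0" unfolding ntrace_def uH_def using G0 by (simp add: inner_prod_def)
  show "ntrace (uH G) Left t = 0" unfolding ntrace_def uH_def by (simp add: inner_prod_def)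
qed

end

definition DL :: "nat \<Rightarrow> real poly" where
  "DL i = smult (-1 / (real i * (real i + 1))) (pderiv (LS i))"

lemma DL_ode: "1 \<le> i \<Longrightarrow> poly (pderiv ([:0,1,-1:] * DL i)) s = poly (LS i) s"
proof -
  assume i: "1 \<le> i"
  have "[:0,1,-1:] * DL i = smult (-1 / (real i * (real i + 1))) ([:0,1,-1:] * pderiv (LS i))"
    unfolding DL_def by (simp only: mult_smult_right)
  then have "poly (pderiv ([:0,1,-1:] * DL i)) s = (-1 / (real i * (real i + 1))) * poly (pderiv ([:0,1,-1:] * pderiv (LS i))) s"
    by (simp only: pderiv_smult poly_smult)
  also have "\<dots> = poly (LS i) s"
  proof -
    have h: "(-1 / X) * (- X * S) = S" if "X \<noteq> 0" for X S :: real using that by (simp add: field_simps)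
    have "real i * (real i + 1) \<noteq> 0" using i by simp
    then show ?thesis unfolding LS_ode_pt by (rule h)
  qed
  finally show ?thesis .
qed

lemma DL_deg: "degree (DL i) \<le> i - 1"
  unfolding DL_def using degree_smult_le[of _ "pderiv (LS i)"] by (simp add: degree_pderiv LS_degree)

lemma Gassm_B:
  assumes "1 \<le> i" "i \<le> k"
  shows "Gassm k ([:0,1:] * DL i) (LS i)"
proof
  have dD: "degree (DL i) \<le> i - 1" by (rule DL_deg)
  have dG: "degree ([:0,1:] * DL i) \<le> i"
    using degree_mult_le[of "[:0,1::real:]" "DL i"] dD assms by simp
  then show "degree ([:0,1:] * DL i) \<le> k" using assms by simp
  show "degree (pderiv ([:0,1:] * DL i)) < k" using dG assms by (simp add: degree_pderiv)
  show "degree (LS i) \<le> k" using assms by (simp add: LS_degree)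
  show "poly ([:0,1:] * DL i) 0 = 0" by simp
  show "(1 - s) * poly (pderiv ([:0,1:] * DL i)) s - poly ([:0,1:] * DL i) s = poly (LS i) s" for s
    using key_id[of "[:0,1:] * DL i" "DL i" s] DL_ode[OF assms(1), of s] by simp
qed

lemma Gassm_L:
  assumes "1 \<le> i" "i \<le> k"
  shows "Gassm k ([:0,1:] * (DL i \<circ>\<^sub>p [:1,-1:])) (- (LS i \<circ>\<^sub>p [:1,-1:]))"
proof
  define D where "D = DL i \<circ>\<^sub>p [:1,-1:]"
  have dD: "degree D \<le> i - 1" unfolding D_def using DL_deg[of i] by (simp add: degree_pcompose)
  have dG: "degree ([:0,1:] * D) \<le> i"
    using degree_mult_le[of "[:0,1::real:]" D] dD assms by simp
  then show "degree ([:0,1:] * (DL i \<circ>\<^sub>p [:1,-1:])) \<le> k" using assms D_def by simp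
  show "degree (pderiv ([:0,1:] * (DL i \<circ>\<^sub>p [:1,-1:]))) < k" using dG assms D_def by (simp add: degree_pderiv)
  show "degree (- (LS i \<circ>\<^sub>p [:1,-1:])) \<le> k" using assms by (simp add: LS_degree degree_pcompose)
  show "poly ([:0,1:] * (DL i \<circ>\<^sub>p [:1,-1:])) 0 = 0" by simp
  fix s :: real
  have w: "[:0,1,-1:] \<circ>\<^sub>p [:1,-1:] = ([:0,1,-1:] :: real poly)"
    by (simp add: pcompose_pCons algebra_simps)
  have "[:0,1,-1:] * D = ([:0,1,-1:] * DL i) \<circ>\<^sub>p [:1,-1:]"
    unfolding D_def pcompose_mult w ..
  then have "pderiv ([:0,1,-1:] * D) = (pderiv ([:0,1,-1:] * DL i) \<circ>\<^sub>p [:1,-1:]) * pderiv [:1,-1:]"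
    by (simp only: pderiv_pcompose)
  then have "poly (pderiv ([:0,1,-1:] * D)) s = - poly (pderiv ([:0,1,-1:] * DL i)) (1 - s)"
    by (simp add: poly_pcompose pderiv_pCons)
  also have "\<dots> = - poly (LS i) (1-s)" using DL_ode[OF assms(1)] by simp
  finally show "(1 - s) * poly (pderiv ([:0,1:] * (DL i \<circ>\<^sub>p [:1,-1:]))) s - poly ([:0,1:] * (DL i \<circ>\<^sub>p [:1,-1:])) s = poly (- (LS i \<circ>\<^sub>p [:1,-1:])) s"
    using key_id[of "[:0,1:] * D" D s] unfolding D_def by (simp add: poly_pcompose)
qed

lemma exists_w:
  assumes "1 \<le> i" "i \<le> k"
  shows "\<exists>w \<kappa>. \<kappa> \<noteq> 0 \<and> vpoly k w \<and> divfree w \<and> (\<forall>e t. ntrace w e t = (if e = f then \<kappa> * poly (LS i) t else 0))"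
proof (cases f)
  case Bottom
  define G where "G = [:0,1:] * DL i"
  interpret Gassm k G "LS i" unfolding G_def by (rule Gassm_B[OF assms])
  define W where "W = uB G (LS i)"
  have "ntrace W e t = (if e = f then 1 * poly (LS i) t else 0)" for e t
    unfolding W_def by (cases e) (simp_all add: uB_props Bottom)
  then show ?thesis using uB_props unfolding W_def[symmetric] by (intro exI[of _ W] exI[of _ "1::real"]) auto
next
  case Hyp
  define G where "G = [:0,1:] * DL i"
  interpret Gassm k G "LS i" unfolding G_def by (rule Gassm_B[OF assms])
  define W where "W = uH G"
  have "ntrace W e t = (if e = f then (1 / sqrt 2) * poly (LS i) t else 0)" for e t
    unfolding W_def by (cases e) (simp_all add: uH_props Hyp)
  moreover have "1 / sqrt 2 \<noteq> (0::real)" by simp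
  ultimately show ?thesis using uH_props unfolding W_def[symmetric] by (intro exI[of _ W] exI[of _ "1 / sqrt 2::real"]) auto
next
  case Left
  define G where "G = [:0,1:] * (DL i \<circ>\<^sub>p [:1,-1:])"
  define S where "S = - (LS i \<circ>\<^sub>p [:1,-1:])"
  interpret Gassm k G S unfolding G_def S_def by (rule Gassm_L[OF assms])
  define W where "W = uL G S"
  have "ntrace W e t = (if e = f then 1 * poly (LS i) t else 0)" for e t
  proof -
    have "- poly S (1-t) = poly (LS i) t" by (simp add: S_def poly_pcompose)
    then show ?thesis unfolding W_def by (cases e) (simp_all add: uL_props Left)
  qed
  then show ?thesis using uL_props unfolding W_def[symmetric] by (intro exI[of _ W] exI[of _ "1::real"]) auto
qed

lemma ntrace_add: "ntrace (\<lambda>p. u p + v p) e t = ntrace u e t + ntrace v e t"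
  unfolding ntrace_def by (simp add: inner_add_left)
lemma ntrace_diff: "ntrace (\<lambda>p. u p - v p) e t = ntrace u e t - ntrace v e t"
  unfolding ntrace_def by (simp add: inner_diff_left)
lemma ntrace_scale: "ntrace (\<lambda>p. r *\<^sub>R u p) e t = r * ntrace u e t"
  unfolding ntrace_def by simp
lemma ntrace_sum: "ntrace (\<lambda>p. \<Sum>i\<in>I. u i p) e t = (\<Sum>i\<in>I. ntrace (u i) e t)"
  unfolding ntrace_def by (simp add: inner_sum_left)
lemma ntrace_const: "ntrace (\<lambda>p. c) e t = c \<bullet> nout e"
  unfolding ntrace_def by simp

lemma edges_all: "e \<in> edges"
  unfolding edges_def by (cases e) auto

lemma elen_pos: "elen e > 0"
  by (cases e) auto

lemma L2B_single: "L2B \<phi> (\<lambda>g' t. if g' = g then \<psi> t else 0) = elen g * integral {0..1} (\<lambda>t. \<phi> g t * \<psi> t)"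
  unfolding L2B_def edges_def by (cases g) auto

definition NN :: "edge \<Rightarrow> nat \<Rightarrow> real" where
  "NN g j = L2B (Lraw g j) (Lraw g j)"

lemma NN_eq: "NN g j = elen g * integral {0..1} (\<lambda>t. poly (LS j) t * poly (LS j) t)"
proof -
  have "Lraw g j = (\<lambda>g' t. if g' = g then poly (LS j) t else 0)"
    unfolding Lraw_def by (auto simp: poly_LS fun_eq_iff)
  then show ?thesis unfolding NN_def
    by (simp only: L2B_single) (simp add: Lraw_def poly_LS)
qed

lemma NN_pos: "NN g j > 0"
  unfolding NN_eq using elen_pos LS_norm_pos by simp

lemma Leg_eq: "Leg g j = (\<lambda>g' t. if g' = g then poly (LS j) t / sqrt (NN g j) else 0)"
  unfolding Leg_def NN_def[symmetric] by (auto simp: Lraw_def poly_LS fun_eq_iff)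

lemma L2B_Leg: "L2B \<phi> (Leg g j) = elen g / sqrt (NN g j) * integral {0..1} (\<lambda>t. \<phi> g t * poly (LS j) t)"
proof -
  have "L2B \<phi> (Leg g j) = elen g * integral {0..1} (\<lambda>t. \<phi> g t * (poly (LS j) t / sqrt (NN g j)))"
    unfolding Leg_eq by (rule L2B_single)
  also have "integral {0..1} (\<lambda>t. \<phi> g t * (poly (LS j) t / sqrt (NN g j))) = (1 / sqrt (NN g j)) * integral {0..1} (\<lambda>t. \<phi> g t * poly (LS j) t)"
    by (subst integral_cmult_real[symmetric]) (rule integral_cong, simp)
  finally show ?thesis by simp
qed

lemma L2B_Leg_zero: "L2B \<phi> (Leg g j) = 0 \<longleftrightarrow> integral {0..1} (\<lambda>t. \<phi> g t * poly (LS j) t) = 0"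
  unfolding L2B_Leg using elen_pos[of g] NN_pos[of g j] by simp

lemma trace_int:
  assumes "vpoly k u" shows "(\<lambda>t. ntrace u e t * poly q t) integrable_on {0..1}"
proof -
  obtain P where P: "\<And>t. ntrace u e t = poly P t" using trace_poly[OF assms, of e] by blast
  show ?thesis unfolding P by (rule cont_poly_int[of "P * q", simplified])
qed

lemma LS0: "poly (LS 0) t = 1" by simp

lemma int_LS: "1 \<le> j \<Longrightarrow> integral {0..1} (\<lambda>t. poly (LS j) t) = 0"
  using LS_orth[of j 0] by simp

lemma double_sum_single:
  assumes "finite A" "finite B" "a \<in> A" "b \<in> B" "\<And>x y. x \<in> A \<Longrightarrow> y \<in> B \<Longrightarrow> (x, y) \<noteq> (a, b) \<Longrightarrow> h x y = (0::real)"
  shows "(\<Sum>x\<in>A. \<Sum>y\<in>B. h x y) = h a b"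
proof -
  have "(\<Sum>x\<in>A. \<Sum>y\<in>B. h x y) = (\<Sum>x\<in>A. if x = a then h a b else 0)"
  proof (rule sum.cong[OF refl])
    fix x assume x: "x \<in> A"
    show "(\<Sum>y\<in>B. h x y) = (if x = a then h a b else 0)"
    proof (cases "x = a")
      case True
      then have "(\<Sum>y\<in>B. h x y) = (\<Sum>y\<in>B. if y = b then h a b else 0)"
        using assms(5) x by (intro sum.cong) auto
      then show ?thesis using True assms(2,4) by simp
    next
      case False then show ?thesis using assms(5) x by simp
    qed
  qed
  then show ?thesis using assms(1,3) by simp
qed

definition Mon :: "nat \<Rightarrow> fld set" where
  "Mon k = (\<lambda>(a,b). (\<lambda>p. (fst p^a * snd p^b, 0))) ` ({..k}\<times>{..k}) \<union> (\<lambda>(a,b). (\<lambda>p. (0, fst p^a * snd p^b))) ` ({..k}\<times>{..k})"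

lemma finite_Mon: "finite (Mon k)"
  unfolding Mon_def by auto

lemma vpoly_lspan:
  assumes "vpoly k u" shows "u \<in> lspan (Mon k)"
proof -
  obtain C1 where C1: "\<And>x y. fst (u (x,y)) = (\<Sum>a\<le>k. \<Sum>b\<le>k. C1 a b * x^a * y^b)"
    using is_poly2_sq[of k "\<lambda>p. fst (u p)"] assms unfolding vpoly_def by auto
  obtain C2 where C2: "\<And>x y. snd (u (x,y)) = (\<Sum>a\<le>k. \<Sum>b\<le>k. C2 a b * x^a * y^b)"
    using is_poly2_sq[of k "\<lambda>p. snd (u p)"] assms unfolding vpoly_def by auto
  define m1 where "m1 a b = (\<lambda>p::real\<times>real. (fst p^a * snd p^b, 0::real))" for a b :: nat
  define m2 where "m2 a b = (\<lambda>p::real\<times>real. (0::real, fst p^a * snd p^b))" for a b :: nat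
  have eq: "u = (\<lambda>p. \<Sum>a\<le>k. \<Sum>b\<le>k. (\<lambda>p. C1 a b *\<^sub>R m1 a b p + C2 a b *\<^sub>R m2 a b p) p)"
  proof
    fix p :: "real \<times> real"
    obtain x y where p: "p = (x,y)" by (cases p)
    show "u p = (\<Sum>a\<le>k. \<Sum>b\<le>k. (\<lambda>p. C1 a b *\<^sub>R m1 a b p + C2 a b *\<^sub>R m2 a b p) p)"
      unfolding p by (rule prod_eqI) (simp_all add: fst_sum snd_sum C1 C2 m1_def m2_def mult.assoc)
  qed
  have "(\<lambda>p. \<Sum>a\<le>k. \<Sum>b\<le>k. (\<lambda>p. C1 a b *\<^sub>R m1 a b p + C2 a b *\<^sub>R m2 a b p) p) \<in> lspan (Mon k)"
  proof (intro lspan_sum)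
    fix a b assume ab: "a \<in> {..k}" "b \<in> {..k}"
    have "m1 a b \<in> Mon k" unfolding Mon_def
      by (rule UnI1, rule image_eqI[of _ _ "(a,b)"]) (use ab in \<open>auto simp: m1_def\<close>)
    moreover have "m2 a b \<in> Mon k" unfolding Mon_def
      by (rule UnI2, rule image_eqI[of _ _ "(a,b)"]) (use ab in \<open>auto simp: m2_def\<close>)
    ultimately show "(\<lambda>p. C1 a b *\<^sub>R m1 a b p + C2 a b *\<^sub>R m2 a b p) \<in> lspan (Mon k)"
      by (intro lspan.la lspan.ls lspan.lb)
  qed auto
  then show ?thesis using eq by simp
qed

lemma subsp_Phi: "subsp (Phi k)"
proof -
  have 1: "(\<lambda>p. 0) \<in> Phi k" unfolding Phi_def by (simp add: vpoly_const divfree_const ntrace_const)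
  have 2: "(\<lambda>p. f p + g p) \<in> Phi k" if "f \<in> Phi k" "g \<in> Phi k" for f g
    using that vpoly_add[of k f g] divfree_add[of k f g] unfolding Phi_def by (simp add: ntrace_add)
  have 3: "(\<lambda>p. r *\<^sub>R f p) \<in> Phi k" if "f \<in> Phi k" for f r
    using that vpoly_scale[of k f r] divfree_scale[of k f r] unfolding Phi_def by (simp add: ntrace_scale)
  show ?thesis unfolding subsp_def using 1 2 3 by blast
qed

lemma Phi_sub_Mon: "Phi k \<subseteq> lspan (Mon k)"
  unfolding Phi_def using vpoly_lspan by auto

lemma vpoly_cont': "vpoly k u \<Longrightarrow> cont u"
  unfolding cont_def by (rule vpoly_cont)

lemma zero_from_L2K:
  assumes "vpoly k d" "L2K d d = 0"
  shows "d p = 0"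
proof -
  define h where "h = (\<lambda>p. d p \<bullet> d p)"
  have ch: "continuous_on UNIV h" unfolding h_def using vpoly_cont[OF assms(1)] by (intro continuous_on_inner)
  let ?B = "cbox (0::real,0::real) (1/2,1/2)"
  have sub: "?B \<subseteq> Khat" unfolding Khat_def by (auto simp: cbox_Pair_iff)
  have iB: "h integrable_on ?B" by (rule integrable_continuous) (use ch continuous_on_subset in blast)
  have iK: "h integrable_on Khat" by (rule cont_int_Khat[OF ch])
  have "integral ?B h \<le> integral Khat h"
    by (rule integral_subset_le[OF sub iB iK]) (simp add: h_def)
  also have "\<dots> = 0" using assms(2) unfolding L2K_def h_def by simp
  finally have le: "integral ?B h \<le> 0" .
  have ge: "integral ?B h \<ge> 0" by (rule integral_nonneg[OF iB]) (simp add: h_def)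
  have hi: "(h has_integral 0) ?B" using le ge iB by (metis antisym integrable_integral)
  have zB: "d q = 0" if "q \<in> ?B" for q
  proof -
    have "h q = 0"
      by (rule has_integral_0_cbox_imp_0[OF continuous_on_subset[OF ch] _ hi _ that])
         (auto simp: h_def box_ne_empty Basis_prod_def)
    then show ?thesis unfolding h_def by simp
  qed
  have P1: "is_poly2 k (\<lambda>p. fst (d p))" and P2: "is_poly2 k (\<lambda>p. snd (d p))"
    using assms(1) unfolding vpoly_def by auto
  have Z: "fst (d (x,y)) = 0 \<and> snd (d (x,y)) = 0" if "x \<in> {0..1/2}" "y \<in> {0..1/2}" for x y
    using zB[of "(x,y)"] that by (simp add: cbox_Pair_iff)
  have "fst (d p) = 0" by (rule is_poly2_identity[OF P1]) (use Z in blast)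
  moreover have "snd (d p) = 0" by (rule is_poly2_identity[OF P2]) (use Z in blast)
  ultimately have "fst (d p) = 0 \<and> snd (d p) = 0" by auto
  then show ?thesis by (simp add: prod_eq_iff)
qed

lemma fin_edges: "finite edges" by (simp add: edges_def)

lemma coef_lemma:
  assumes dec: "is_decomp k u v0 v1 vf" and A: "vpoly k u" and f: "f \<in> edges" and i: "i \<in> {1..k}"
  shows "integral {0..1} (\<lambda>t. ntrace (vf f i) f t * poly (LS i) t) = integral {0..1} (\<lambda>t. ntrace u f t * poly (LS i) t)"
proof -
  from dec have sv: "\<And>p. u p = v0 p + v1 p + (\<Sum>f\<in>edges. \<Sum>i=1..k. vf f i p)"
    and v0: "v0 \<in> Phi k" and v1: "\<exists>c. \<forall>p. v1 p = c"
    and vfp: "\<And>f i. f \<in> edges \<Longrightarrow> i \<in> {1..k} \<Longrightarrow> vpoly k (vf f i)"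
    and vfo: "\<And>f i g j. f \<in> edges \<Longrightarrow> i \<in> {1..k} \<Longrightarrow> g \<in> edges \<Longrightarrow> j \<le> k \<Longrightarrow> (g, j) \<noteq> (f, i) \<Longrightarrow> L2B (ntrace (vf f i)) (Leg g j) = 0"
    unfolding is_decomp_def by blast+
  obtain c where c: "\<And>p. v1 p = c" using v1 by blast
  have ueq: "u = (\<lambda>p. v0 p + v1 p + (\<Sum>f\<in>edges. \<Sum>i=1..k. vf f i p))" using sv by auto
  have tr: "ntrace u f t = c \<bullet> nout f + (\<Sum>f'\<in>edges. \<Sum>i'=1..k. ntrace (vf f' i') f t)" if "t \<in> {0..1}" for t
  proof -
    have "ntrace v0 f t = 0" using v0 that f unfolding Phi_def by auto
    moreover have "ntrace v1 f t = c \<bullet> nout f" unfolding c ntrace_const by simp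
    ultimately show ?thesis
      unfolding ntrace_def by (subst ueq) (simp add: inner_add_left inner_sum_left)
  qed
  have "integral {0..1} (\<lambda>t. ntrace u f t * poly (LS i) t)
      = integral {0..1} (\<lambda>t. (c \<bullet> nout f) * poly (LS i) t + (\<Sum>f'\<in>edges. \<Sum>i'=1..k. ntrace (vf f' i') f t * poly (LS i) t))"
    by (rule integral_cong) (simp add: tr sum_distrib_right distrib_right)
  also have "\<dots> = (c \<bullet> nout f) * integral {0..1} (\<lambda>t. poly (LS i) t) + (\<Sum>f'\<in>edges. \<Sum>i'=1..k. integral {0..1} (\<lambda>t. ntrace (vf f' i') f t * poly (LS i) t))"
  proof -
    have int1: "(\<lambda>t. (c \<bullet> nout f) * poly (LS i) t) integrable_on {0..1}"
      by (intro integrable_continuous_real continuous_intros)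
    have int2: "(\<lambda>t. ntrace (vf f' i') f t * poly (LS i) t) integrable_on {0..1}" if "f' \<in> edges" "i' \<in> {1..k}" for f' i'
      by (rule trace_int[OF vfp[OF that]])
    have int3: "(\<lambda>t. \<Sum>i'=1..k. ntrace (vf f' i') f t * poly (LS i) t) integrable_on {0..1}" if "f' \<in> edges" for f'
      using int2 that by (intro integrable_sum) auto
    have "integral {0..1} (\<lambda>t. (\<Sum>f'\<in>edges. \<Sum>i'=1..k. ntrace (vf f' i') f t * poly (LS i) t))
        = (\<Sum>f'\<in>edges. integral {0..1} (\<lambda>t. \<Sum>i'=1..k. ntrace (vf f' i') f t * poly (LS i) t))"
      using int3 edges_all fin_edges by (intro integral_sum) auto
    also have "\<dots> = (\<Sum>f'\<in>edges. \<Sum>i'=1..k. integral {0..1} (\<lambda>t. ntrace (vf f' i') f t * poly (LS i) t))"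
      by (intro sum.cong refl integral_sum) (auto intro: int2)
    finally have e2: "integral {0..1} (\<lambda>t. (\<Sum>f'\<in>edges. \<Sum>i'=1..k. ntrace (vf f' i') f t * poly (LS i) t))
        = (\<Sum>f'\<in>edges. \<Sum>i'=1..k. integral {0..1} (\<lambda>t. ntrace (vf f' i') f t * poly (LS i) t))" .
    have int4: "(\<lambda>t. (\<Sum>f'\<in>edges. \<Sum>i'=1..k. ntrace (vf f' i') f t * poly (LS i) t)) integrable_on {0..1}"
      by (rule integrable_sum[OF fin_edges]) (rule int3[OF edges_all])
    show ?thesis using e2 int1 int4 by (simp add: integral_add integral_cmult_real)
  qed
  also have "\<dots> = integral {0..1} (\<lambda>t. ntrace (vf f i) f t * poly (LS i) t)"
  proof -
    have "integral {0..1} (\<lambda>t. poly (LS i) t) = 0" using i int_LS by auto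
    moreover have "(\<Sum>f'\<in>edges. \<Sum>i'=1..k. integral {0..1} (\<lambda>t. ntrace (vf f' i') f t * poly (LS i) t))
        = integral {0..1} (\<lambda>t. ntrace (vf f i) f t * poly (LS i) t)"
    proof (rule double_sum_single[OF _ _ f i])
      fix f' i' assume "f' \<in> edges" "i' \<in> {1..k}" "(f', i') \<noteq> (f, i)"
      then show "integral {0..1} (\<lambda>t. ntrace (vf f' i') f t * poly (LS i) t) = 0"
        using vfo[of f' i' f i] f i L2B_Leg_zero by auto
    qed (auto simp: fin_edges)
    ultimately show ?thesis by simp
  qed
  finally show ?thesis by simp
qed

lemma sum_edges_if: "(\<Sum>f\<in>edges. if e = f then X else 0) = (X::real)"
  using edges_all[of e] fin_edges by (simp add: sum.delta)

lemma existence: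
  assumes A: "vpoly k u" and D: "divfree u"
  shows "\<exists>v0 v1 vf. is_decomp k u v0 v1 vf"
proof -
  obtain B where B: "finite B" "B \<subseteq> Phi k" "Phi k \<subseteq> lspan B"
    using finite_basis[OF finite_Mon subsp_Phi Phi_sub_Mon] by blast
  have cB: "\<And>b. b \<in> B \<Longrightarrow> cont b" using B(2) unfolding Phi_def by (auto intro: vpoly_cont')
  have lB: "lspan B \<subseteq> Phi k" by (rule lspan_sub[OF subsp_Phi B(2)])
  define nP where "nP j = integral {0..1} (\<lambda>t. poly (LS j) t * poly (LS j) t)" for j
  have nPpos: "nP j > 0" for j unfolding nP_def by (rule LS_norm_pos)
  define \<alpha> where "\<alpha> f i = integral {0..1} (\<lambda>t. ntrace u f t * poly (LS i) t) / nP i" for f i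
  define Q where "Q f i z \<longleftrightarrow> (1 \<le> i \<and> i \<le> k \<longrightarrow> vpoly k z \<and> divfree z \<and> (\<forall>\<phi>\<in>Phi k. L2K z \<phi> = 0)
      \<and> (\<forall>e t. t \<in> {0..1} \<longrightarrow> ntrace z e t = (if e = f then \<alpha> f i * poly (LS i) t else 0)))" for f i z
  have ex: "\<exists>z. Q f i z" for f i
  proof (cases "1 \<le> i \<and> i \<le> k")
    case False then show ?thesis unfolding Q_def by blast
  next
    case True
    obtain w \<kappa> where w: "\<kappa> \<noteq> 0" "vpoly k w" "divfree w" "\<And>e t. ntrace w e t = (if e = f then \<kappa> * poly (LS i) t else 0)"
      using exists_w[of i k f] True by blast
    obtain s where s: "s \<in> lspan B" "\<forall>b\<in>B. L2K (\<lambda>p. w p - s p) b = 0"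
      using projection[OF B(1) cB vpoly_cont'[OF w(2)]] by blast
    have sP: "s \<in> Phi k" using s(1) lB by blast
    then have sv: "vpoly k s" "divfree s" "\<And>e t. t \<in> {0..1} \<Longrightarrow> ntrace s e t = 0"
      unfolding Phi_def using edges_all by auto
    define z where "z = (\<lambda>p. (\<alpha> f i / \<kappa>) *\<^sub>R (w p - s p))"
    have vz: "vpoly k z" unfolding z_def by (intro vpoly_scale vpoly_diff w(2) sv(1))
    have dz: "divfree z" unfolding z_def
      by (rule divfree_scale[OF vpoly_diff[OF w(2) sv(1)] divfree_diff[OF w(2) sv(1) w(3) sv(2)]])
    have oz: "L2K z \<phi> = 0" if "\<phi> \<in> Phi k" for \<phi>
    proof -
      have cws: "cont (\<lambda>p. w p - s p)" by (rule cont_diff[OF vpoly_cont'[OF w(2)] vpoly_cont'[OF sv(1)]])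
      have "L2K (\<lambda>p. w p - s p) \<phi> = 0" by (rule orth_lspan[OF cws cB]) (use s(2) B(3) that in auto)
      then show ?thesis unfolding z_def by (simp add: L2K_scale_left)
    qed
    have tz: "ntrace z e t = (if e = f then \<alpha> f i * poly (LS i) t else 0)" if "t \<in> {0..1}" for e t
      unfolding z_def ntrace_scale ntrace_diff using w(1,4) sv(3)[OF that] by simp
    show ?thesis unfolding Q_def using vz dz oz tz by blast
  qed
  define vf where "vf f i = (SOME z. Q f i z)" for f i
  have vfQ: "Q f i (vf f i)" for f i unfolding vf_def by (rule someI_ex[OF ex])
  have vfp: "vpoly k (vf f i)" "divfree (vf f i)" "\<And>\<phi>. \<phi> \<in> Phi k \<Longrightarrow> L2K (vf f i) \<phi> = 0"
      "\<And>e t. t \<in> {0..1} \<Longrightarrow> ntrace (vf f i) e t = (if e = f then \<alpha> f i * poly (LS i) t else 0)"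
    if "i \<in> {1..k}" for f i using that vfQ[of f i] unfolding Q_def by auto
  define m where "m e = integral {0..1} (\<lambda>t. ntrace u e t)" for e
  have flux: "m Bottom + sqrt 2 * m Hyp + m Left = 0"
    using flux_zero[OF A D] unfolding edges_def m_def by simp
  define c where "c = (- m Left, - m Bottom)"
  define v1 where "v1 = (\<lambda>p::real\<times>real. c)"
  define S where "S = (\<lambda>p. \<Sum>f\<in>edges. \<Sum>i=1..k. vf f i p)"
  define v0 where "v0 = (\<lambda>p. u p - v1 p - S p)"
  have trv1: "ntrace v1 e t = m e" for e t
  proof (cases e)
    case Hyp
    have "ntrace v1 e t = (- m Left - m Bottom) / sqrt 2" unfolding v1_def ntrace_const c_def Hyp
      by (simp add: inner_prod_def divide_inverse algebra_simps)
    also have "\<dots> = m Hyp" using flux by (simp add: field_simps)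
    finally show ?thesis using Hyp by simp
  qed (simp_all add: v1_def ntrace_const c_def inner_prod_def)
  have inS: "vpoly k (\<lambda>p. \<Sum>i=1..k. vf f i p) \<and> divfree (\<lambda>p. \<Sum>i=1..k. vf f i p)" for f
  proof -
    have h: "\<And>i. i \<in> {1..k} \<Longrightarrow> vpoly k (vf f i) \<and> divfree (vf f i)" using vfp by auto
    show ?thesis using vpoly_sum[of "{1..k}" k "vf f"] divfree_sum[of "{1..k}" k "vf f"] h by auto
  qed
  have SP: "vpoly k S" unfolding S_def using inS vpoly_sum[OF fin_edges, of k "\<lambda>f p. \<Sum>i=1..k. vf f i p"] by auto
  have SD: "divfree S" unfolding S_def using inS divfree_sum[OF fin_edges, of k "\<lambda>f p. \<Sum>i=1..k. vf f i p"] by auto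
  have uv1P: "vpoly k (\<lambda>p. u p - v1 p)" unfolding v1_def by (intro vpoly_diff A vpoly_const)
  have uv1D: "divfree (\<lambda>p. u p - v1 p)" unfolding v1_def
    by (intro divfree_diff[of k] A D vpoly_const divfree_const)
  have v0P: "vpoly k v0" unfolding v0_def by (intro vpoly_diff uv1P SP)
  have v0D: "divfree v0" unfolding v0_def by (intro divfree_diff[of k] uv1P SP uv1D SD)
  have v0T: "ntrace v0 e t = 0" if t: "t \<in> {0..1}" for e t
  proof -
    have e1: "ntrace v0 e t' = ntrace u e t' - m e - (\<Sum>i=1..k. \<alpha> e i * poly (LS i) t')" if "t' \<in> {0..1}" for t'
    proof -
      have "ntrace S e t' = (\<Sum>f\<in>edges. \<Sum>i=1..k. ntrace (vf f i) e t')"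
        unfolding S_def by (simp add: ntrace_sum)
      also have "\<dots> = (\<Sum>f\<in>edges. if e = f then (\<Sum>i=1..k. \<alpha> e i * poly (LS i) t') else 0)"
        by (intro sum.cong refl) (auto simp: vfp(4)[OF _ that])
      also have "\<dots> = (\<Sum>i=1..k. \<alpha> e i * poly (LS i) t')" by (rule sum_edges_if)
      finally show ?thesis unfolding v0_def ntrace_diff trv1 by simp
    qed
    obtain Pu where Pu: "degree Pu \<le> k" "\<And>t. ntrace u e t = poly Pu t" using trace_poly[OF A] by blast
    define Qp where "Qp = Pu - [:m e:] - (\<Sum>i=1..k. smult (\<alpha> e i) (LS i))"
    have degQ: "degree Qp \<le> k"
    proof -
      have "degree (\<Sum>i=1..k. smult (\<alpha> e i) (LS i)) \<le> k"
        by (rule degree_sum_le) (auto intro: order.trans[OF degree_smult_le] simp: LS_degree)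
      then show ?thesis unfolding Qp_def using Pu(1)
        by (metis (no_types, lifting) degree_diff_le degree_pCons_0 le0 le_trans max.bounded_iff)
    qed
    have pQ: "poly Qp t' = poly Pu t' - m e - (\<Sum>i=1..k. \<alpha> e i * poly (LS i) t')" for t'
      unfolding Qp_def by (simp add: poly_sum)
    have orth: "integral {0..1} (\<lambda>t. poly Qp t * poly (LS j) t) = 0" if j: "j \<le> k" for j
    proof -
      have "integral {0..1} (\<lambda>t. poly Qp t * poly (LS j) t)
          = integral {0..1} (\<lambda>t. poly Pu t * poly (LS j) t - m e * poly (LS j) t - (\<Sum>i=1..k. \<alpha> e i * (poly (LS i) t * poly (LS j) t)))"
        unfolding pQ by (simp add: algebra_simps sum_distrib_right sum_distrib_left)
      also have "\<dots> = integral {0..1} (\<lambda>t. poly Pu t * poly (LS j) t) - m e * integral {0..1} (\<lambda>t. poly (LS j) t)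
           - (\<Sum>i=1..k. \<alpha> e i * integral {0..1} (\<lambda>t. poly (LS i) t * poly (LS j) t))"
        by (simp add: integral_diff integral_sum integrable_diff integrable_sum integral_cmult_real
              integrable_continuous_real continuous_intros)
      also have "\<dots> = 0"
      proof (cases "j = 0")
        case True
        have "integral {0..1} (\<lambda>t. poly Pu t * poly (LS j) t) = m e"
          unfolding m_def True by (rule integral_cong) (simp add: Pu(2))
        moreover have "integral {0..1} (\<lambda>t. poly (LS j) t) = 1" using True by simp
        moreover have "integral {0..1} (\<lambda>t. poly (LS i) t * poly (LS j) t) = 0" if "i \<in> {1..k}" for i
          using LS_orth[of i j] True that by simp
        ultimately show ?thesis by simp
      next
        case False
        have "integral {0..1} (\<lambda>t. poly (LS j) t) = 0" using False int_LS by simp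
        moreover have "(\<Sum>i=1..k. \<alpha> e i * integral {0..1} (\<lambda>t. poly (LS i) t * poly (LS j) t)) = \<alpha> e j * nP j"
        proof -
          have "(\<Sum>i=1..k. \<alpha> e i * integral {0..1} (\<lambda>t. poly (LS i) t * poly (LS j) t))
              = (\<Sum>i=1..k. if i = j then \<alpha> e j * nP j else 0)"
            by (intro sum.cong refl) (auto simp: LS_orth nP_def)
          also have "\<dots> = \<alpha> e j * nP j" using False j by simp
          finally show ?thesis .
        qed
        moreover have "\<alpha> e j * nP j = integral {0..1} (\<lambda>t. poly Pu t * poly (LS j) t)"
          unfolding \<alpha>_def using nPpos[of j] by (simp add: Pu(2))
        ultimately show ?thesis by simp
      qed
      finally show ?thesis .
    qed
    have "poly Qp t = 0" by (rule ortho_zero[OF degQ orth t])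
    then show ?thesis using e1[OF t] pQ[of t] by (simp add: Pu(2))
  qed
  have dec: "is_decomp k u v0 v1 vf"
    unfolding is_decomp_def
  proof (intro conjI ballI allI impI)
    show "u p = v0 p + v1 p + (\<Sum>f\<in>edges. \<Sum>i=1..k. vf f i p)" for p unfolding v0_def S_def by simp
    show "v0 \<in> Phi k" unfolding Phi_def using v0P v0D v0T by auto
    show "\<exists>c. \<forall>p. v1 p = c" unfolding v1_def by blast
    fix f i assume f: "f \<in> edges" and i: "i \<in> {1..k}"
    show "vpoly k (vf f i)" "divfree (vf f i)" using vfp i by auto
    show "L2K (vf f i) w = 0" if "w \<in> Phi k" for w using vfp(3)[OF i that] .
    fix g j assume g: "g \<in> edges" and j: "j \<le> k" and ne: "(g, j) \<noteq> (f, i)"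
    have "integral {0..1} (\<lambda>t. ntrace (vf f i) g t * poly (LS j) t)
        = integral {0..1} (\<lambda>t. if g = f then \<alpha> f i * (poly (LS i) t * poly (LS j) t) else 0)"
      by (rule integral_cong) (simp add: vfp(4)[OF i])
    also have "\<dots> = 0"
    proof (cases "g = f")
      case True
      then have "j \<noteq> i" using ne by simp
      then show ?thesis using True by (simp add: integral_cmult_real LS_orth)
    next
      case False then show ?thesis by simp
    qed
    finally show "L2B (ntrace (vf f i)) (Leg g j) = 0" unfolding L2B_Leg_zero .
  qed
  then show ?thesis by blast
qed

lemma uniqueness:
  assumes A: "vpoly k u" and dv: "is_decomp k u v0 v1 vf" and dw: "is_decomp k u w0 w1 wg"
  shows "v0 = w0 \<and> v1 = w1 \<and> (\<forall>f\<in>edges. \<forall>i\<in>{1..k}. vf f i = wg f i)"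
proof -
  from dv have sv: "\<And>p. u p = v0 p + v1 p + (\<Sum>f\<in>edges. \<Sum>i=1..k. vf f i p)"
    and v0: "v0 \<in> Phi k" and v1: "\<exists>c. \<forall>p. v1 p = c"
    and vfp: "\<And>f i. f \<in> edges \<Longrightarrow> i \<in> {1..k} \<Longrightarrow> vpoly k (vf f i) \<and> divfree (vf f i) \<and> (\<forall>w\<in>Phi k. L2K (vf f i) w = 0)"
    and vfo: "\<And>f i g j. f \<in> edges \<Longrightarrow> i \<in> {1..k} \<Longrightarrow> g \<in> edges \<Longrightarrow> j \<le> k \<Longrightarrow> (g, j) \<noteq> (f, i) \<Longrightarrow> L2B (ntrace (vf f i)) (Leg g j) = 0"
    unfolding is_decomp_def by blast+
  from dw have sw: "\<And>p. u p = w0 p + w1 p + (\<Sum>f\<in>edges. \<Sum>i=1..k. wg f i p)"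
    and w0: "w0 \<in> Phi k" and w1: "\<exists>c. \<forall>p. w1 p = c"
    and wgp: "\<And>f i. f \<in> edges \<Longrightarrow> i \<in> {1..k} \<Longrightarrow> vpoly k (wg f i) \<and> divfree (wg f i) \<and> (\<forall>w\<in>Phi k. L2K (wg f i) w = 0)"
    and wgo: "\<And>f i g j. f \<in> edges \<Longrightarrow> i \<in> {1..k} \<Longrightarrow> g \<in> edges \<Longrightarrow> j \<le> k \<Longrightarrow> (g, j) \<noteq> (f, i) \<Longrightarrow> L2B (ntrace (wg f i)) (Leg g j) = 0"
    unfolding is_decomp_def by blast+
  have eqf: "vf f i = wg f i" if f: "f \<in> edges" and i: "i \<in> {1..k}" for f i
  proof -
    define d where "d = (\<lambda>p. vf f i p - wg f i p)"
    have vv: "vpoly k (vf f i)" "divfree (vf f i)" using vfp[OF f i] by auto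
    have ww: "vpoly k (wg f i)" "divfree (wg f i)" using wgp[OF f i] by auto
    have vd: "vpoly k d" unfolding d_def by (rule vpoly_diff[OF vv(1) ww(1)])
    have dd: "divfree d" unfolding d_def by (rule divfree_diff[OF vv(1) ww(1) vv(2) ww(2)])
    have oz: "integral {0..1} (\<lambda>t. ntrace d g t * poly (LS j) t) = 0" if j: "j \<le> k" for g j
    proof -
      have split: "integral {0..1} (\<lambda>t. ntrace d g t * poly (LS j) t)
          = integral {0..1} (\<lambda>t. ntrace (vf f i) g t * poly (LS j) t) - integral {0..1} (\<lambda>t. ntrace (wg f i) g t * poly (LS j) t)"
        unfolding d_def ntrace_diff left_diff_distrib
        by (rule integral_diff[OF trace_int[OF vv(1)] trace_int[OF ww(1)]])
      show ?thesis
      proof (cases "(g,j) = (f,i)")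
        case True then show ?thesis
          using coef_lemma[OF dv A f i] coef_lemma[OF dw A f i] split by simp
      next
        case False then show ?thesis
          using vfo[OF f i edges_all j False] wgo[OF f i edges_all j False] split L2B_Leg_zero by simp
      qed
    qed
    have tz: "ntrace d g t = 0" if "t \<in> {0..1}" for g t
    proof -
      obtain P where P: "degree P \<le> k" "\<And>t. ntrace d g t = poly P t" using trace_poly[OF vd] by blast
      have oz': "\<And>j. j \<le> k \<Longrightarrow> integral {0..1} (\<lambda>t. poly P t * poly (LS j) t) = 0"
        using oz[of _ g] unfolding P(2) .
      show ?thesis unfolding P(2) by (rule ortho_zero[OF P(1) oz' that])
    qed
    have dP: "d \<in> Phi k" unfolding Phi_def using vd dd tz by auto
    have "L2K d d = L2K (vf f i) d - L2K (wg f i) d" unfolding d_def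
      by (rule L2K_diff_left) (auto intro: vpoly_cont' vv ww vd[unfolded d_def])
    also have "\<dots> = 0" using vfp[OF f i] wgp[OF f i] dP by simp
    finally have "L2K d d = 0" .
    then have "d p = 0" for p by (rule zero_from_L2K[OF vd])
    then show ?thesis unfolding d_def by (auto simp: fun_eq_iff)
  qed
  have sums: "(\<Sum>f\<in>edges. \<Sum>i=1..k. vf f i p) = (\<Sum>f\<in>edges. \<Sum>i=1..k. wg f i p)" for p
    using eqf edges_all by (intro sum.cong refl) auto
  obtain c where c: "\<And>p. v1 p = c" using v1 by blast
  obtain c' where c': "\<And>p. w1 p = c'" using w1 by blast
  have vw: "v0 p + c = w0 p + c'" for p using sv[of p] sw[of p] sums[of p] c c' by simp
  have tre: "c \<bullet> nout e = c' \<bullet> nout e" for e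
  proof -
    have "(v0 (gam e 0) + c) \<bullet> nout e = (w0 (gam e 0) + c') \<bullet> nout e" by (simp add: vw)
    moreover have "v0 (gam e 0) \<bullet> nout e = 0" "w0 (gam e 0) \<bullet> nout e = 0"
      using v0 w0 edges_all unfolding Phi_def ntrace_def by auto
    ultimately show ?thesis by (simp add: inner_add_left)
  qed
  have "c = c'"
    using tre[of Bottom] tre[of Left] by (cases c, cases c') (simp add: inner_prod_def)
  then have "v1 = w1" "v0 = w0" using c c' vw by (auto simp: fun_eq_iff)
  then show ?thesis using eqf by blast
qed

theorem proposition10:
  fixes k :: nat and u :: "real \<times> real \<Rightarrow> real \<times> real"
  assumes "vpoly k u" and "divfree u"
  shows "(\<exists>v0 v1 vf. is_decomp k u v0 v1 vf)
       \<and> (\<forall>v0 v1 vf w0 w1 wf. is_decomp k u v0 v1 vf \<and> is_decomp k u w0 w1 wf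
            \<longrightarrow> v0 = w0 \<and> v1 = w1 \<and> (\<forall>f\<in>edges. \<forall>i\<in>{1..k}. vf f i = wf f i))"
  using existence[OF assms] uniqueness[OF assms(1)] by blast

end
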